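(* Let $\mathcal G$ be a tree on $n\ge2$ nodes, with oriented incidence matrix $D_\tau\in\mathbb R^{n\times(n-1)}$, edge-weight matrix $W=\rho I$ for some $\rho>0$, and time-scale matrix $E=\mathrm{diag}(\epsilon_1,\dots,\epsilon_n)$, $\epsilon_i>0$; let $L_{e,s}^\tau=D_\tau^TE^{-1}D_\tau$ and $\sigma_w,\sigma_v$ real scalars. Consider $$\tilde\Sigma_\tau(s)=\big(sI+L_{e,s}^\tau W\big)^{-1}\begin{bmatrix}\sigma_wD_\tau^TE^{-1/2} & -\sigma_vL_{e,s}^\tau W^{1/2}\end{bmatrix},\qquad\Pi_\tau(s)=W^{1/2}\tilde\Sigma_\tau(s).$$ Then $$\|\tilde\Sigma_\tau\|_\infty^2=\frac1\rho\|\Pi_\tau\|_\infty^2=\frac{1}{\rho^2}\sigma_w^2\,\bar\sigma\big((L_{e,s}^\tau)^{-1}\big)+\frac1\rho\sigma_v^2=L=U,$$ where $L=\max\{L_1,L_2\}$ with $L_1=\dfrac{\sigma_w^2+\sigma_v^2\lambda_{\min}(L_{e,s}^\tau)\lambda_{\max}(W^{1/2})^2}{\lambda_{\min}(L_{e,s}^\tau)\lambda_{\max}(W^{1/2})^4}$, $L_2=\dfrac{\sigma_w^2+\sigma_v^2\lambda_{\max}(L_{e,s}^\tau)\lambda_{\max}(W^{1/2})\lambda_{\min}(W^{1/2})}{\lambda_{\max}(L_{e,s}^\tau)\lambda_{\max}(W^{1/2})^3\lambda_{\min}(W^{1/2})}$, and $U=\dfrac{\sigma_w^2+\sigma_v^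2\lambda_{\min}(L_{e,s}^\tau)\lambda_{\min}(W^{1/2})^2}{\lambda_{\min}(L_{e,s}^\tau)\lambda_{\min}(W^{1/2})^4}$.
   Context: The incidence matrix of a graph with an arbitrary orientation of each edge has entry $1$ in row $i$, column $l$ if node $i$ is the initial node of edge $l$, $-1$ if it is the terminal node, and $0$ otherwise. Powers of positive diagonal matrices are taken entrywise. $\lambda_{\max},\lambda_{\min}$ denote the largest and smallest eigenvalues of a symmetric matrix. For a stable transfer matrix $\Phi(s)$, $\|\Phi\|_\infty=\sup_{\omega\in\mathbb R}\bar\sigma(\Phi(j\omega))$ where $\bar\sigma$ is the largest singular value. *)

theory Defs
  imports Complex_Main "Jordan_Normal_Form.Jordan_Normal_Form"
begin

(* Graphs on the vertex set {0..<n}; edges are given as a list of ordered pairs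
   (initial node, terminal node), i.e. an arbitrary orientation of each edge. *)

definition ug_adj :: "(nat \<times> nat) list \<Rightarrow> (nat \<times> nat) set" where
  "ug_adj es = {(u,v). \<exists>l<length es. es ! l = (u,v) \<or> es ! l = (v,u)}"

definition ug_connected :: "nat \<Rightarrow> (nat \<times> nat) list \<Rightarrow> bool" where
  "ug_connected n es = (\<forall>u<n. \<forall>v<n. (u,v) \<in> (ug_adj es)\<^sup>*)"

(* A tree: a connected loop-free graph in which every edge is a bridge
   (minimally connected graph). *)
definition is_tree :: "nat \<Rightarrow> (nat \<times> nat) list \<Rightarrow> bool" where
  "is_tree n es =
     ((\<forall>l<length es. fst (es ! l) < n \<and> snd (es ! l) < n \<and> fst (es ! l) \<noteq> snd (es ! l))
      \<and> ug_connected n es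
      \<and> (\<forall>l<length es. (fst (es ! l), snd (es ! l)) \<notin> (ug_adj (take l es @ drop (Suc l) es))\<^sup>*))"

definition incidence :: "nat \<Rightarrow> (nat \<times> nat) list \<Rightarrow> real mat" where
  "incidence n es = mat n (length es)
     (\<lambda>(i,l). if i = fst (es ! l) then 1 else if i = snd (es ! l) then -1 else 0)"

definition diag_of :: "nat \<Rightarrow> (nat \<Rightarrow> real) \<Rightarrow> real mat" where
  "diag_of n d = mat n n (\<lambda>(i,j). if i = j then d i else 0)"

definition diag_pow :: "real mat \<Rightarrow> real \<Rightarrow> real mat" where
  "diag_pow A p = mat (dim_row A) (dim_col A) (\<lambda>(i,j). if i = j then (A $$ (i,i)) powr p else 0)"

definition minv :: "'a::field mat \<Rightarrow> 'a mat" where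
  "minv A = (THE B. B \<in> carrier_mat (dim_row A) (dim_row A)
                  \<and> A * B = 1\<^sub>m (dim_row A) \<and> B * A = 1\<^sub>m (dim_row A))"

definition hcat :: "'a::zero mat \<Rightarrow> 'a mat \<Rightarrow> 'a mat" where
  "hcat A B = mat (dim_row A) (dim_col A + dim_col B)
     (\<lambda>(i,j). if j < dim_col A then A $$ (i,j) else B $$ (i, j - dim_col A))"

definition lam_max :: "real mat \<Rightarrow> real" where
  "lam_max A = Max {k. eigenvalue A k}"

definition lam_min :: "real mat \<Rightarrow> real" where
  "lam_min A = Min {k. eigenvalue A k}"

definition cmat :: "real mat \<Rightarrow> complex mat" where
  "cmat A = map_mat complex_of_real A"

definition conj_transpose :: "complex mat \<Rightarrow> complex mat" where
  "conj_transpose A = map_mat cnj (transpose_mat A)"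

definition sigma_max :: "complex mat \<Rightarrow> real" where
  "sigma_max A = sqrt (Max (Re ` {k. eigenvalue (conj_transpose A * A) k}))"

definition hinf_norm :: "(complex \<Rightarrow> complex mat) \<Rightarrow> real" where
  "hinf_norm Phi = (SUP \<omega>::real. sigma_max (Phi (\<i> * complex_of_real \<omega>)))"

end

theory Submission
  imports Defs "HOL-Computational_Algebra.Fundamental_Theorem_Algebra"
begin

definition hip :: "complex vec \<Rightarrow> complex vec \<Rightarrow> complex" where
  "hip u v = (\<Sum>i<dim_vec u. cnj (u$i) * v$i)"

definition nrm2 :: "complex vec \<Rightarrow> real" where
  "nrm2 v = (\<Sum>i<dim_vec v. (cmod (v$i))\<^sup>2)"

lemma nrm2_nonneg: "0 \<le> nrm2 v"
  unfolding nrm2_def by (simp add: sum_nonneg)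

lemma hip_self: "hip v v = complex_of_real (nrm2 v)"
  unfolding hip_def nrm2_def of_real_sum
  apply (rule sum.cong, simp) by (metis complex_norm_square mult.commute of_real_power)

lemma nrm2_zero_iff: assumes "v \<in> carrier_vec n" shows "nrm2 v = 0 \<longleftrightarrow> v = 0\<^sub>v n"
proof
  assume "nrm2 v = 0"
  then have "\<forall>i\<in>{..<dim_vec v}. (cmod (v$i))\<^sup>2 = 0"
    unfolding nrm2_def by (subst sum_nonneg_eq_0_iff[symmetric]) auto
  then show "v = 0\<^sub>v n" using assms by (intro eq_vecI) auto
next
  assume "v = 0\<^sub>v n" then show "nrm2 v = 0" by (simp add: nrm2_def)
qed

lemma nrm2_pos: assumes "v \<in> carrier_vec n" "v \<noteq> 0\<^sub>v n" shows "nrm2 v > 0"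
  using nrm2_zero_iff[OF assms(1)] assms(2) nrm2_nonneg[of v] by (simp add: order_less_le)

lemma hip_cnj: assumes "u \<in> carrier_vec n" "v \<in> carrier_vec n"
  shows "hip u v = cnj (hip v u)"
  using assms unfolding hip_def by (simp add: mult.commute)

lemma hip_add_left: assumes "u \<in> carrier_vec n" "w \<in> carrier_vec n" "v \<in> carrier_vec n"
  shows "hip (u + w) v = hip u v + hip w v"
  using assms unfolding hip_def by (simp add: distrib_right sum.distrib)

lemma hip_add_right: assumes "u \<in> carrier_vec n" "w \<in> carrier_vec n" "v \<in> carrier_vec n"
  shows "hip v (u + w) = hip v u + hip v w"
  using assms unfolding hip_def by (simp add: distrib_left sum.distrib)

lemma hip_smult_left: "hip (c \<cdot>\<^sub>v u) v = cnj c * hip u v"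
  unfolding hip_def by (simp add: sum_distrib_left mult.assoc)

lemma hip_smult_right: assumes "u \<in> carrier_vec n" "v \<in> carrier_vec n"
  shows "hip u (c \<cdot>\<^sub>v v) = c * hip u v"
  using assms unfolding hip_def by (simp add: sum_distrib_left mult_ac)

lemma nrm2_smult: "nrm2 (c \<cdot>\<^sub>v v) = (cmod c)\<^sup>2 * nrm2 v"
  unfolding nrm2_def by (simp add: sum_distrib_left norm_mult power_mult_distrib)

lemma conj_transpose_carrier[simp]: "A \<in> carrier_mat n m \<Longrightarrow> conj_transpose A \<in> carrier_mat m n"
  unfolding conj_transpose_def by auto

lemma conj_transpose_dims[simp]: "dim_row (conj_transpose A) = dim_col A" "dim_col (conj_transpose A) = dim_row A"
  unfolding conj_transpose_def by auto

lemma conj_transpose_index[simp]: "i < dim_col A \<Longrightarrow> j < dim_row A \<Longrightarrow> conj_transpose A $$ (i,j) = cnj (A $$ (j,i))"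
  unfolding conj_transpose_def by auto

lemma mult_mat_vec_index: "A \<in> carrier_mat n m \<Longrightarrow> v \<in> carrier_vec m \<Longrightarrow> i < n \<Longrightarrow>
   (A *\<^sub>v v) $ i = (\<Sum>j<m. A $$ (i,j) * v $ j)"
  by (auto simp: scalar_prod_def lessThan_atLeast0 intro!: sum.cong)

lemma hip_adj: assumes A: "A \<in> carrier_mat n m" and u: "u \<in> carrier_vec n" and v: "v \<in> carrier_vec m"
  shows "hip u (A *\<^sub>v v) = hip (conj_transpose A *\<^sub>v u) v"
proof -
  have "hip u (A *\<^sub>v v) = (\<Sum>i<n. cnj (u$i) * (\<Sum>j<m. A $$ (i,j) * v $ j))"
    unfolding hip_def using u A v by (auto simp del: index_mult_mat_vec simp: mult_mat_vec_index[OF A v] intro!: sum.cong)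
  also have "\<dots> = (\<Sum>i<n. \<Sum>j<m. cnj (u$i) * A $$ (i,j) * v $ j)"
    by (simp add: sum_distrib_left mult.assoc)
  also have "\<dots> = (\<Sum>j<m. \<Sum>i<n. cnj (u$i) * A $$ (i,j) * v $ j)"
    by (rule sum.swap)
  also have "\<dots> = (\<Sum>j<m. cnj ((conj_transpose A *\<^sub>v u) $ j) * v $ j)"
    using A u by (auto simp del: index_mult_mat_vec simp: mult_mat_vec_index[OF conj_transpose_carrier[OF A] u] sum_distrib_right sum_distrib_left mult_ac intro!: sum.cong)
  also have "\<dots> = hip (conj_transpose A *\<^sub>v u) v"
    unfolding hip_def using A by simp
  finally show ?thesis .
qed

lemma nrm2_add: assumes "u \<in> carrier_vec n" "v \<in> carrier_vec n"
  shows "nrm2 (u + v) = nrm2 u + nrm2 v + 2 * Re (hip u v)"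
proof -
  have "complex_of_real (nrm2 (u+v)) = hip (u+v) (u+v)" by (simp add: hip_self)
  also have "\<dots> = hip u u + hip v v + (hip u v + hip v u)"
    using assms by (simp add: hip_add_left hip_add_right)
  also have "hip u v + hip v u = complex_of_real (2 * Re (hip u v))"
    using hip_cnj[OF assms(2,1)] by (simp add: complex_add_cnj)
  finally have "complex_of_real (nrm2 (u+v)) = complex_of_real (nrm2 u + nrm2 v + 2 * Re (hip u v))"
    by (simp add: hip_self)
  then show ?thesis using of_real_eq_iff by blast
qed

lemma quad_disc:
  fixes a B c :: real
  assumes h: "\<And>t. 0 \<le> a - 2*t*B + t^2*B*c" and B: "B \<ge> 0" and c: "c \<ge> 0"
  shows "B \<le> a * c"
proof (cases "c = 0")
  case True
  have "B = 0"
  proof (rule ccontr)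
    assume "B \<noteq> 0" then have "B > 0" using B by simp
    have "0 \<le> a - 2*((\<bar>a\<bar>+1)/B)*B" using h[of "(\<bar>a\<bar>+1)/B"] True by simp
    also have "\<dots> = a - 2*(\<bar>a\<bar>+1)" using \<open>B>0\<close> by simp
    finally show False using abs_ge_self[of a] abs_ge_zero[of a] by (simp add: algebra_simps)
  qed
  then show ?thesis using True by simp
next
  case False
  then have cp: "c > 0" using c by simp
  have "0 \<le> a - 2*(1/c)*B + (1/c)^2*B*c" by (rule h)
  also have "\<dots> = a - B/c" using cp by (simp add: power2_eq_square field_simps)
  finally have "B/c \<le> a" by simp
  then show ?thesis using cp by (simp add: divide_le_eq mult.commute)
qed

lemma herm_hip_real:
  assumes A: "A \<in> carrier_mat m m" and H: "conj_transpose A = A" and y: "y \<in> carrier_vec m"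
  shows "hip y (A *\<^sub>v y) = complex_of_real (Re (hip y (A *\<^sub>v y)))"
proof -
  have "hip y (A *\<^sub>v y) = hip (A *\<^sub>v y) y" using hip_adj[OF A y y] H by simp
  also have "\<dots> = cnj (hip y (A *\<^sub>v y))" using hip_cnj[of "A *\<^sub>v y" m y] A y by simp
  finally have "Im (hip y (A *\<^sub>v y)) = 0" by (metis cnj.sel(2) equal_neg_zero)
  then show ?thesis by (simp add: complex_eq_iff)
qed

lemma herm_hip_swap:
  assumes A: "A \<in> carrier_mat m m" and H: "conj_transpose A = A" and x: "x \<in> carrier_vec m" and y: "y \<in> carrier_vec m"
  shows "hip y (A *\<^sub>v x) = cnj (hip x (A *\<^sub>v y))"
proof -
  have "hip y (A *\<^sub>v x) = hip (A *\<^sub>v y) x" using hip_adj[OF A y x] H by simp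
  also have "\<dots> = cnj (hip x (A *\<^sub>v y))" using hip_cnj[OF mult_mat_vec_carrier[OF A y] x] by simp
  finally show ?thesis .
qed

lemma cauchy_schwarz_psd:
  assumes A: "A \<in> carrier_mat m m" and H: "conj_transpose A = A"
    and psd: "\<And>z. z \<in> carrier_vec m \<Longrightarrow> 0 \<le> Re (hip z (A *\<^sub>v z))"
    and x: "x \<in> carrier_vec m" and y: "y \<in> carrier_vec m"
  shows "(cmod (hip x (A *\<^sub>v y)))\<^sup>2 \<le> Re (hip x (A *\<^sub>v x)) * Re (hip y (A *\<^sub>v y))"
proof -
  define b where "b = hip x (A *\<^sub>v y)"
  define a where "a = Re (hip x (A *\<^sub>v x))"
  define c where "c = Re (hip y (A *\<^sub>v y))"
  define B where "B = (cmod b)\<^sup>2"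
  have bb: "cnj b * b = complex_of_real B" unfolding B_def
    by (metis complex_norm_square mult.commute of_real_power)
  have hyx: "hip y (A *\<^sub>v x) = cnj b" unfolding b_def by (rule herm_hip_swap[OF A H x y])
  have cr: "hip y (A *\<^sub>v y) = complex_of_real c" unfolding c_def by (rule herm_hip_real[OF A H y])
  have ar: "hip x (A *\<^sub>v x) = complex_of_real a" unfolding a_def by (rule herm_hip_real[OF A H x])
  have "0 \<le> a - 2*t*B + t^2*B*c" for t
  proof -
    define k where "k = - (complex_of_real t * cnj b)"
    define z where "z = x + k \<cdot>\<^sub>v y"
    have z: "z \<in> carrier_vec m" unfolding z_def using x y by simp
    have Ax: "A *\<^sub>v x \<in> carrier_vec m" and Ay: "A *\<^sub>v y \<in> carrier_vec m" using A x y by auto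
    have Az: "A *\<^sub>v z = A *\<^sub>v x + k \<cdot>\<^sub>v (A *\<^sub>v y)"
      unfolding z_def using A x y by (simp add: mult_add_distrib_mat_vec mult_mat_vec)
    have Aky: "k \<cdot>\<^sub>v (A *\<^sub>v y) \<in> carrier_vec m" using Ay by simp
    have ky: "k \<cdot>\<^sub>v y \<in> carrier_vec m" using y by simp
    have s1: "hip z (A *\<^sub>v z) = hip x (A *\<^sub>v x + k \<cdot>\<^sub>v (A *\<^sub>v y)) + hip (k \<cdot>\<^sub>v y) (A *\<^sub>v x + k \<cdot>\<^sub>v (A *\<^sub>v y))"
      unfolding Az unfolding z_def by (rule hip_add_left[OF x ky]) (use Ax Aky in simp)
    have s2: "hip x (A *\<^sub>v x + k \<cdot>\<^sub>v (A *\<^sub>v y)) = hip x (A *\<^sub>v x) + k * hip x (A *\<^sub>v y)"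
      using hip_add_right[OF Ax Aky x] hip_smult_right[OF x Ay] by simp
    have s3: "hip y (A *\<^sub>v x + k \<cdot>\<^sub>v (A *\<^sub>v y)) = hip y (A *\<^sub>v x) + k * hip y (A *\<^sub>v y)"
      using hip_add_right[OF Ax Aky y] hip_smult_right[OF y Ay] by simp
    have "hip z (A *\<^sub>v z) = hip x (A *\<^sub>v x) + k * hip x (A *\<^sub>v y) + cnj k * hip y (A *\<^sub>v x) + cnj k * k * hip y (A *\<^sub>v y)"
      unfolding s1 hip_smult_left s2 s3 by (simp add: algebra_simps)
    also have "\<dots> = complex_of_real (a - 2*t*B + t^2*B*c)"
    proof -
      have bb': "b * cnj b = complex_of_real B" using bb by (simp add: mult.commute)
      have e1: "k * b = - complex_of_real (t*B)" unfolding k_def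
        by (metis bb minus_mult_left mult.assoc of_real_mult)
      have e2: "cnj k * cnj b = - complex_of_real (t*B)" unfolding k_def
        by (simp add: bb' mult.assoc)
      have "cnj k * k = complex_of_real (t*t) * (b * cnj b)" unfolding k_def by (simp add: mult_ac)
      then have e3: "cnj k * k = complex_of_real (t^2*B)" by (simp add: bb' power2_eq_square)
      show ?thesis unfolding hyx cr ar b_def[symmetric] e1 e2 e3
        by (simp add: algebra_simps)
    qed
    finally have "Re (hip z (A *\<^sub>v z)) = a - 2*t*B + t^2*B*c" by simp
    then show ?thesis using psd[OF z] by simp
  qed
  moreover have "c \<ge> 0" unfolding c_def by (rule psd[OF y])
  ultimately have "B \<le> a * c" using quad_disc[of a B c] unfolding B_def by simp
  then show ?thesis unfolding B_def b_def a_def c_def .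
qed

lemma cauchy_schwarz:
  assumes x: "x \<in> carrier_vec m" and y: "y \<in> carrier_vec m"
  shows "(cmod (hip x y))\<^sup>2 \<le> nrm2 x * nrm2 y"
proof -
  have H: "conj_transpose (1\<^sub>m m) = 1\<^sub>m m"
    by (rule eq_matI) (auto simp: conj_transpose_def)
  have "(cmod (hip x (1\<^sub>m m *\<^sub>v y)))\<^sup>2 \<le> Re (hip x (1\<^sub>m m *\<^sub>v x)) * Re (hip y (1\<^sub>m m *\<^sub>v y))"
    by (rule cauchy_schwarz_psd[OF one_carrier_mat H _ x y]) (simp add: hip_self nrm2_nonneg)
  then show ?thesis using x y by (simp add: hip_self)
qed

lemma sum_squares_bound_2: "2 * (x * y) \<le> x\<^sup>2 + (y::real)\<^sup>2"
proof -
  have "0 \<le> (x - y)\<^sup>2" by simp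
  also have "\<dots> = x\<^sup>2 + y\<^sup>2 - 2 * (x * y)" by (simp add: power2_diff)
  finally show ?thesis by simp
qed

lemma quad_form_bound:
  assumes A: "A \<in> carrier_mat m m" and y: "y \<in> carrier_vec m"
  shows "cmod (hip y (A *\<^sub>v y)) \<le> (\<Sum>i<m. \<Sum>j<m. cmod (A$$(i,j))) * nrm2 y"
proof -
  have yi: "cmod (y$i) * cmod (y$j) \<le> nrm2 y" if "i < m" "j < m" for i j
  proof -
    have "(cmod (y$i))\<^sup>2 \<le> nrm2 y" unfolding nrm2_def
      using y that by (intro member_le_sum) auto
    moreover have "(cmod (y$j))\<^sup>2 \<le> nrm2 y" unfolding nrm2_def
      using y that by (intro member_le_sum) auto
    moreover have h3: "2 * (cmod (y$i) * cmod (y$j)) \<le> (cmod (y$i))\<^sup>2 + (cmod (y$j))\<^sup>2"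
      by (rule sum_squares_bound_2)
    ultimately show ?thesis by linarith
  qed
  have "hip y (A *\<^sub>v y) = (\<Sum>i<m. \<Sum>j<m. cnj (y$i) * (A $$ (i,j) * y $ j))"
    unfolding hip_def using y A
    by (auto simp del: index_mult_mat_vec simp: mult_mat_vec_index[OF A y] sum_distrib_left intro!: sum.cong)
  then have "cmod (hip y (A *\<^sub>v y)) \<le> (\<Sum>i<m. \<Sum>j<m. cmod (cnj (y$i) * (A $$ (i,j) * y $ j)))"
    by (simp only:) (rule order_trans[OF norm_sum sum_mono[OF norm_sum]])
  also have "\<dots> \<le> (\<Sum>i<m. \<Sum>j<m. cmod (A$$(i,j)) * nrm2 y)"
  proof (intro sum_mono)
    fix i j assume "i \<in> {..<m}" "j \<in> {..<m}"
    then have "cmod (y$i) * cmod (y$j) \<le> nrm2 y" using yi by auto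
    then have "cmod (A$$(i,j)) * (cmod (y$i) * cmod (y$j)) \<le> cmod (A$$(i,j)) * nrm2 y"
      by (rule mult_left_mono) simp
    then show "cmod (cnj (y$i) * (A $$ (i,j) * y $ j)) \<le> cmod (A$$(i,j)) * nrm2 y"
      by (simp add: norm_mult mult_ac)
  qed
  also have "\<dots> = (\<Sum>i<m. \<Sum>j<m. cmod (A$$(i,j))) * nrm2 y"
    by (simp add: sum_distrib_right)
  finally show ?thesis .
qed

lemma minv_unique:
  fixes A B :: "'a::field mat"
  assumes A: "A \<in> carrier_mat n n" and B: "B \<in> carrier_mat n n"
    and AB: "A * B = 1\<^sub>m n" and BA: "B * A = 1\<^sub>m n"
  shows "minv A = B"
  unfolding minv_def
proof (rule the_equality)
  show "B \<in> carrier_mat (dim_row A) (dim_row A) \<and> A * B = 1\<^sub>m (dim_row A) \<and> B * A = 1\<^sub>m (dim_row A)"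
    using A B AB BA by simp
next
  fix B' assume h: "B' \<in> carrier_mat (dim_row A) (dim_row A) \<and> A * B' = 1\<^sub>m (dim_row A) \<and> B' * A = 1\<^sub>m (dim_row A)"
  then have B': "B' \<in> carrier_mat n n" and B'A: "B' * A = 1\<^sub>m n" using A by auto
  have "B' = B' * (A * B)" using AB B' by simp
  also have "\<dots> = (B' * A) * B" using assoc_mult_mat[OF B' A B] by simp
  also have "\<dots> = B" using B'A B by simp
  finally show "B' = B" .
qed

lemma inverse_exists:
  fixes A :: "'a::field mat"
  assumes A: "A \<in> carrier_mat n n"
    and inj: "\<And>v. v \<in> carrier_vec n \<Longrightarrow> A *\<^sub>v v = 0\<^sub>v n \<Longrightarrow> v = 0\<^sub>v n"
  shows "\<exists>B \<in> carrier_mat n n. A * B = 1\<^sub>m n \<and> B * A = 1\<^sub>m n"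
proof -
  have "det A \<noteq> 0" using det_0_iff_vec_prod_zero[OF A] inj by blast
  from det_non_zero_imp_unit[OF A this]
  have "A \<in> Units (ring_mat TYPE('a) n n)" .
  then show ?thesis unfolding Units_def ring_mat_def by auto
qed

lemma cmat_carrier[simp]: "A \<in> carrier_mat n m \<Longrightarrow> cmat A \<in> carrier_mat n m"
  unfolding cmat_def by simp

lemma cmat_dims[simp]: "dim_row (cmat A) = dim_row A" "dim_col (cmat A) = dim_col A"
  unfolding cmat_def by auto

lemma cmat_index[simp]: "i < dim_row A \<Longrightarrow> j < dim_col A \<Longrightarrow> cmat A $$ (i,j) = complex_of_real (A $$ (i,j))"
  unfolding cmat_def by simp

lemma cmat_mult: "A \<in> carrier_mat n k \<Longrightarrow> B \<in> carrier_mat k m \<Longrightarrow> cmat (A * B) = cmat A * cmat B"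
  unfolding cmat_def by (rule of_real_hom.mat_hom_mult)

lemma cmat_one: "cmat (1\<^sub>m n) = 1\<^sub>m n"
  unfolding cmat_def by (rule eq_matI) auto

lemma cmat_smult: "cmat (c \<cdot>\<^sub>m A) = complex_of_real c \<cdot>\<^sub>m cmat A"
  unfolding cmat_def by (rule eq_matI) auto

lemma cmat_add: "A \<in> carrier_mat n m \<Longrightarrow> B \<in> carrier_mat n m \<Longrightarrow> cmat (A + B) = cmat A + cmat B"
  unfolding cmat_def by (rule eq_matI) auto

lemma conj_transpose_cmat: "conj_transpose (cmat A) = cmat (transpose_mat A)"
  unfolding cmat_def conj_transpose_def by (rule eq_matI) auto

lemma cmat_mult_vec: assumes A: "A \<in> carrier_mat n m" and v: "v \<in> carrier_vec m"
  shows "cmat A *\<^sub>v map_vec complex_of_real v = map_vec complex_of_real (A *\<^sub>v v)"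
proof (rule eq_vecI)
  fix i assume "i < dim_vec (map_vec complex_of_real (A *\<^sub>v v))"
  then have i: "i < n" using A by simp
  have "(cmat A *\<^sub>v map_vec complex_of_real v) $ i = (\<Sum>j<m. cmat A $$ (i,j) * (map_vec complex_of_real v) $ j)"
    by (rule mult_mat_vec_index[OF cmat_carrier[OF A] _ i]) (use v in simp)
  also have "\<dots> = complex_of_real (\<Sum>j<m. A $$ (i,j) * v $ j)"
    using A v i by (simp add: of_real_sum)
  also have "\<dots> = map_vec complex_of_real (A *\<^sub>v v) $ i"
    using mult_mat_vec_index[OF A v i] A i by simp
  finally show "(cmat A *\<^sub>v map_vec complex_of_real v) $ i = map_vec complex_of_real (A *\<^sub>v v) $ i" .
qed (use A in simp)

lemma conj_transpose_mult:
  assumes A: "A \<in> carrier_mat n k" and B: "B \<in> carrier_mat k m"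
  shows "conj_transpose (A * B) = conj_transpose B * conj_transpose A"
proof (rule eq_matI)
  fix i j assume "i < dim_row (conj_transpose B * conj_transpose A)" "j < dim_col (conj_transpose B * conj_transpose A)"
  then have i: "i < m" and j: "j < n" using A B by auto
  show "conj_transpose (A * B) $$ (i, j) = (conj_transpose B * conj_transpose A) $$ (i, j)"
    using A B i j by (auto simp: scalar_prod_def mult.commute intro!: sum.cong)
qed (use A B in auto)

lemma conj_transpose_smult: "conj_transpose (c \<cdot>\<^sub>m A) = cnj c \<cdot>\<^sub>m conj_transpose A"
  unfolding conj_transpose_def by (rule eq_matI) auto

lemma conj_transpose_one: "conj_transpose (1\<^sub>m n) = 1\<^sub>m n"
  unfolding conj_transpose_def by (rule eq_matI) auto

lemma conj_transpose_add: "A \<in> carrier_mat n m \<Longrightarrow> B \<in> carrier_mat n m \<Longrightarrow> conj_transpose (A + B) = conj_transpose A + conj_transpose B"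
  unfolding conj_transpose_def by (rule eq_matI) auto

lemma conj_transpose_minus: "A \<in> carrier_mat n m \<Longrightarrow> B \<in> carrier_mat n m \<Longrightarrow> conj_transpose (A - B) = conj_transpose A - conj_transpose B"
  unfolding conj_transpose_def by (rule eq_matI) auto

lemma conj_transpose_conj_transpose[simp]: "conj_transpose (conj_transpose A) = A"
  unfolding conj_transpose_def by (rule eq_matI) auto

lemma nrm2_ofreal: "nrm2 (map_vec complex_of_real v) = (\<Sum>i<dim_vec v. (v$i)\<^sup>2)"
  unfolding nrm2_def by simp

lemma hip_minus_right: assumes "u \<in> carrier_vec n" "w \<in> carrier_vec n" "v \<in> carrier_vec n"
  shows "hip v (u - w) = hip v u - hip v w"
  using assms unfolding hip_def by (simp add: right_diff_distrib sum_subtractf)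

lemma hip_zero_left[simp]: "hip (0\<^sub>v n) v = 0"
  unfolding hip_def by simp

lemma smult_one_mult_vec: fixes c :: complex assumes v: "v \<in> carrier_vec m" shows "(c \<cdot>\<^sub>m 1\<^sub>m m) *\<^sub>v v = c \<cdot>\<^sub>v v"
proof (rule eq_vecI)
  fix i assume "i < dim_vec (c \<cdot>\<^sub>v v)"
  then have i: "i < m" using v by simp
  have "((c \<cdot>\<^sub>m 1\<^sub>m m) *\<^sub>v v) $ i = (\<Sum>j<m. (c \<cdot>\<^sub>m 1\<^sub>m m) $$ (i,j) * v$j)"
    by (rule mult_mat_vec_index) (use v i in auto)
  also have "\<dots> = (\<Sum>j<m. if j = i then c * v$i else 0)" by (rule sum.cong) (use i in auto)
  also have "\<dots> = c * v$i" using i by simp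
  finally show "((c \<cdot>\<^sub>m 1\<^sub>m m) *\<^sub>v v) $ i = (c \<cdot>\<^sub>v v) $ i" using i v by simp
qed (use v in simp)

lemma nrm2_unit_vec: "i < m \<Longrightarrow> nrm2 (unit_vec m i) = 1"
proof -
  assume i: "i < m"
  have "(\<Sum>j<m. (cmod (unit_vec m i $ j))\<^sup>2) = (\<Sum>j<m. if j = i then 1 else 0)"
    by (rule sum.cong) (auto simp: unit_vec_def)
  then show ?thesis unfolding nrm2_def using i by simp
qed

lemma Re_le_cmod': "Re z \<le> cmod z"
  using complex_Re_le_cmod by blast

lemma spectral_min:
  fixes L :: "real mat"
  assumes L: "L \<in> carrier_mat m m" and m: "m > 0" and sym: "transpose_mat L = L"
  shows "\<exists>\<mu>. eigenvalue L \<mu> \<and> (\<forall>k. eigenvalue L k \<longrightarrow> \<mu> \<le> k)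
            \<and> (\<forall>w \<in> carrier_vec m. \<mu> * nrm2 w \<le> Re (hip w (cmat L *\<^sub>v w)))"
proof -
  define Lc where "Lc = cmat L"
  have Lc: "Lc \<in> carrier_mat m m" unfolding Lc_def using L by simp
  have LcH: "conj_transpose Lc = Lc" unfolding Lc_def conj_transpose_cmat sym ..
  define R where "R w = Re (hip w (Lc *\<^sub>v w))" for w
  define U where "U = {R w | w. w \<in> carrier_vec m \<and> nrm2 w = 1}"
  define K where "K = (\<Sum>i<m. \<Sum>j<m. cmod (Lc$$(i,j)))"
  have e0: "unit_vec m 0 \<in> carrier_vec m" "nrm2 (unit_vec m 0) = 1" using m by (auto simp: nrm2_unit_vec)
  have Une: "U \<noteq> {}" unfolding U_def using e0 by blast
  have Ubdd: "bdd_below U"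
  proof (rule bdd_belowI)
    fix x assume "x \<in> U"
    then obtain w where w: "w \<in> carrier_vec m" "nrm2 w = 1" and x: "x = R w" unfolding U_def by blast
    have "cmod (hip w (Lc *\<^sub>v w)) \<le> K" using quad_form_bound[OF Lc w(1)] w(2) unfolding K_def by simp
    then show "- K \<le> x" unfolding x R_def using abs_Re_le_cmod[of "hip w (Lc *\<^sub>v w)"] by linarith
  qed
  define \<mu> where "\<mu> = Inf U"
  have claim1: "\<mu> * nrm2 w \<le> R w" if w: "w \<in> carrier_vec m" for w
  proof (cases "w = 0\<^sub>v m")
    case True then show ?thesis unfolding R_def by (simp add: nrm2_def)
  next
    case False
    define s where "s = nrm2 w"
    have s: "s > 0" unfolding s_def using nrm2_pos[OF w False] .
    define c where "c = complex_of_real (1 / sqrt s)"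
    define w' where "w' = c \<cdot>\<^sub>v w"
    have w': "w' \<in> carrier_vec m" unfolding w'_def using w by simp
    have cc: "cnj c * c = complex_of_real (1/s)" unfolding c_def using s
      by (simp flip: of_real_mult)
    have "nrm2 w' = (cmod c)\<^sup>2 * s" unfolding w'_def s_def by (rule nrm2_smult)
    also have "\<dots> = 1" unfolding c_def using s by (simp add: norm_divide power_divide)
    finally have n1: "nrm2 w' = 1" .
    have "hip w' (Lc *\<^sub>v w') = cnj c * c * hip w (Lc *\<^sub>v w)"
      unfolding w'_def hip_smult_left mult_mat_vec[OF Lc w]
      using hip_smult_right[OF w mult_mat_vec_carrier[OF Lc w]] by simp
    then have "R w' = R w / s" unfolding R_def cc by simp
    moreover have "\<mu> \<le> R w'" unfolding \<mu>_def
      by (rule cInf_lower[OF _ Ubdd]) (use w' n1 U_def in blast)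
    ultimately have "\<mu> \<le> R w / s" by simp
    then show ?thesis unfolding s_def[symmetric] using s by (simp add: le_divide_eq mult.commute)
  qed
  define M where "M = Lc - complex_of_real \<mu> \<cdot>\<^sub>m 1\<^sub>m m"
  have M: "M \<in> carrier_mat m m" unfolding M_def carrier_mat_def using Lc by auto
  have MH: "conj_transpose M = M" unfolding M_def
    using Lc by (simp add: conj_transpose_minus conj_transpose_smult conj_transpose_one LcH)
  have Mv: "M *\<^sub>v w = Lc *\<^sub>v w - complex_of_real \<mu> \<cdot>\<^sub>v w" if w: "w \<in> carrier_vec m" for w
    unfolding M_def using Lc w by (simp add: minus_mult_distrib_mat_vec smult_one_mult_vec)
  have RM: "Re (hip w (M *\<^sub>v w)) = R w - \<mu> * nrm2 w" if w: "w \<in> carrier_vec m" for w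
  proof -
    have "hip w (M *\<^sub>v w) = hip w (Lc *\<^sub>v w) - complex_of_real \<mu> * hip w w"
      unfolding Mv[OF w] using hip_minus_right[OF mult_mat_vec_carrier[OF Lc w] _ w, of "complex_of_real \<mu> \<cdot>\<^sub>v w"]
        hip_smult_right[OF w w] w by simp
    then show ?thesis unfolding R_def hip_self by simp
  qed
  have Mpsd: "0 \<le> Re (hip w (M *\<^sub>v w))" if w: "w \<in> carrier_vec m" for w
    using RM[OF w] claim1[OF w] by simp
  have claim2: "\<exists>w. w \<in> carrier_vec m \<and> w \<noteq> 0\<^sub>v m \<and> M *\<^sub>v w = 0\<^sub>v m"
  proof (rule ccontr)
    assume "\<not> ?thesis"
    then have inj: "\<And>v. v \<in> carrier_vec m \<Longrightarrow> M *\<^sub>v v = 0\<^sub>v m \<Longrightarrow> v = 0\<^sub>v m" by blast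
    obtain N where N: "N \<in> carrier_mat m m" and NM: "N * M = 1\<^sub>m m"
      using inverse_exists[OF M inj] by blast
    define P where "P = conj_transpose N * N"
    have P: "P \<in> carrier_mat m m" unfolding P_def by (rule mult_carrier_mat[OF conj_transpose_carrier[OF N] N])
    define K1 where "K1 = (\<Sum>i<m. \<Sum>j<m. cmod (M$$(i,j)))"
    define K2 where "K2 = (\<Sum>i<m. \<Sum>j<m. cmod (P$$(i,j)))"
    have K1: "K1 \<ge> 0" unfolding K1_def by (simp add: sum_nonneg)
    have K2: "K2 \<ge> 0" unfolding K2_def by (simp add: sum_nonneg)
    have key: "1 \<le> K2 * (K1 * (R w - \<mu>))" if w: "w \<in> carrier_vec m" and n1: "nrm2 w = 1" for w
    proof -
      define x where "x = M *\<^sub>v w"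
      have x: "x \<in> carrier_vec m" unfolding x_def using M w by simp
      define Q where "Q = Re (hip w (M *\<^sub>v w))"
      have Q: "Q = R w - \<mu>" unfolding Q_def using RM[OF w] n1 by simp
      have Q0: "Q \<ge> 0" unfolding Q_def by (rule Mpsd[OF w])
      have "hip w (M *\<^sub>v x) = hip x x" unfolding x_def using hip_adj[OF M w x] MH x_def by simp
      then have hwx: "hip w (M *\<^sub>v x) = complex_of_real (nrm2 x)" by (simp add: hip_self)
      have cs: "(nrm2 x)\<^sup>2 \<le> Q * Re (hip x (M *\<^sub>v x))"
        using cauchy_schwarz_psd[OF M MH Mpsd w x] unfolding hwx Q_def by simp
      have b: "Re (hip x (M *\<^sub>v x)) \<le> K1 * nrm2 x"
        using quad_form_bound[OF M x] Re_le_cmod'[of "hip x (M *\<^sub>v x)"] unfolding K1_def by linarith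
      have a: "nrm2 x \<le> K1 * Q"
      proof (cases "nrm2 x = 0")
        case True then show ?thesis using K1 Q0 by simp
      next
        case False
        then have xp: "nrm2 x > 0" using nrm2_nonneg[of x] by simp
        have "(nrm2 x)\<^sup>2 \<le> Q * (K1 * nrm2 x)" using cs b Q0 mult_left_mono by (metis order_trans)
        then have "nrm2 x * nrm2 x \<le> (K1 * Q) * nrm2 x" by (simp add: power2_eq_square mult_ac)
        then show ?thesis using xp by simp
      qed
      have "N *\<^sub>v x = w" unfolding x_def using assoc_mult_mat_vec[OF N M w, symmetric] NM w by simp
      then have "1 = nrm2 (N *\<^sub>v x)" using n1 by simp
      also have "\<dots> = Re (hip (N *\<^sub>v x) (N *\<^sub>v x))" by (simp add: hip_self)
      also have "hip (N *\<^sub>v x) (N *\<^sub>v x) = hip x (conj_transpose N *\<^sub>v (N *\<^sub>v x))"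
        using hip_adj[OF conj_transpose_carrier[OF N] x mult_mat_vec_carrier[OF N x]] by simp
      also have "\<dots> = hip x (P *\<^sub>v x)" unfolding P_def
        using assoc_mult_mat_vec[OF conj_transpose_carrier[OF N] N x] by simp
      also have "Re \<dots> \<le> K2 * nrm2 x"
        using quad_form_bound[OF P x] Re_le_cmod'[of "hip x (P *\<^sub>v x)"] unfolding K2_def by linarith
      also have "\<dots> \<le> K2 * (K1 * Q)" using a K2 by (rule mult_left_mono)
      finally show ?thesis unfolding Q .
    qed
    define eps where "eps = 1 / (K2 * K1 + 1)"
    have KK: "0 \<le> K2 * K1" using K1 K2 by simp
    have epsp: "eps > 0" unfolding eps_def using KK by simp
    have "Inf U < \<mu> + eps" unfolding \<mu>_def using epsp by simp
    then obtain r where "r \<in> U" "r < \<mu> + eps" using cInf_lessD[OF Une] by blast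
    then obtain w where w: "w \<in> carrier_vec m" "nrm2 w = 1" and rw: "R w < \<mu> + eps"
      unfolding U_def by blast
    have "1 \<le> (K2 * K1) * (R w - \<mu>)" using key[OF w] by (simp add: mult_ac)
    also have "\<dots> \<le> (K2 * K1) * eps" using rw K1 K2 by (intro mult_left_mono) auto
    also have "\<dots> < 1" unfolding eps_def using KK by simp
    finally show False by simp
  qed
  then obtain w where w: "w \<in> carrier_vec m" "w \<noteq> 0\<^sub>v m" and Mw: "M *\<^sub>v w = 0\<^sub>v m" by blast
  have Lw: "(Lc *\<^sub>v w) $ i = complex_of_real \<mu> * w $ i" if i: "i < m" for i
  proof -
    have "(M *\<^sub>v w) $ i = 0" using Mw i by simp
    then show ?thesis unfolding Mv[OF w(1)] using i Lc w(1) by simp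
  qed
  have Lcomp: "(Lc *\<^sub>v w) $ i = (\<Sum>j<m. complex_of_real (L$$(i,j)) * w $ j)" if i: "i < m" for i
    using mult_mat_vec_index[OF Lc w(1) i] L i unfolding Lc_def by (auto intro!: sum.cong)
  have realev: "L *\<^sub>v vec m (\<lambda>i. f (w$i)) = \<mu> \<cdot>\<^sub>v vec m (\<lambda>i. f (w$i))"
    if f: "\<And>a z. f (complex_of_real a * z) = a * f z" "\<And>z1 z2. f (z1 + z2) = f z1 + f z2" "f 0 = 0" for f
  proof (rule eq_vecI)
    fix i assume "i < dim_vec (\<mu> \<cdot>\<^sub>v vec m (\<lambda>i. f (w $ i)))"
    then have i: "i < m" by simp
    have fs: "f (\<Sum>j\<in>A. g j) = (\<Sum>j\<in>A. f (g j))" if "finite A" for A g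
      using that by (induct A rule: finite_induct) (auto simp: f)
    have "(L *\<^sub>v vec m (\<lambda>i. f (w$i))) $ i = (\<Sum>j<m. L$$(i,j) * f (w$j))"
      using mult_mat_vec_index[OF L _ i, of "vec m (\<lambda>i. f (w$i))"] by simp
    also have "\<dots> = f ((Lc *\<^sub>v w) $ i)" unfolding Lcomp[OF i] fs[OF finite_lessThan] f(1) ..
    also have "\<dots> = \<mu> * f (w $ i)" unfolding Lw[OF i] f(1) ..
    finally show "(L *\<^sub>v vec m (\<lambda>i. f (w$i))) $ i = (\<mu> \<cdot>\<^sub>v vec m (\<lambda>i. f (w $ i))) $ i" using i by simp
  qed (use L in simp)
  have evRe: "L *\<^sub>v vec m (\<lambda>i. Re (w$i)) = \<mu> \<cdot>\<^sub>v vec m (\<lambda>i. Re (w$i))" by (rule realev) auto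
  have evIm: "L *\<^sub>v vec m (\<lambda>i. Im (w$i)) = \<mu> \<cdot>\<^sub>v vec m (\<lambda>i. Im (w$i))" by (rule realev) auto
  have ev: "eigenvalue L \<mu>"
  proof (cases "vec m (\<lambda>i. Re (w$i)) = 0\<^sub>v m")
    case False
    then show ?thesis unfolding eigenvalue_def eigenvector_def using L evRe by (intro exI[of _ "vec m (\<lambda>i. Re (w$i))"]) auto
  next
    case True
    have "vec m (\<lambda>i. Im (w$i)) \<noteq> 0\<^sub>v m"
    proof
      assume "vec m (\<lambda>i. Im (w$i)) = 0\<^sub>v m"
      note Im0 = this
      have "w $ i = 0" if i: "i < m" for i
      proof -
        have "vec m (\<lambda>i. Re (w$i)) $ i = 0\<^sub>v m $ i" using True by simp
        moreover have "vec m (\<lambda>i. Im (w$i)) $ i = 0\<^sub>v m $ i" using Im0 by simp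
        ultimately show ?thesis using i by (simp add: complex_eq_iff)
      qed
      then have "w = 0\<^sub>v m" using w(1) by (intro eq_vecI) auto
      with w(2) show False by simp
    qed
    then show ?thesis unfolding eigenvalue_def eigenvector_def using L evIm by (intro exI[of _ "vec m (\<lambda>i. Im (w$i))"]) auto
  qed
  have minev: "\<mu> \<le> k" if k: "eigenvalue L k" for k
  proof -
    obtain v where v: "v \<in> carrier_vec m" "v \<noteq> 0\<^sub>v m" "L *\<^sub>v v = k \<cdot>\<^sub>v v"
      using k L unfolding eigenvalue_def eigenvector_def by auto
    define vc where "vc = map_vec complex_of_real v"
    have vc: "vc \<in> carrier_vec m" unfolding vc_def using v by simp
    have vc0: "vc \<noteq> 0\<^sub>v m"
    proof
      assume "vc = 0\<^sub>v m"
      then have "v = 0\<^sub>v m" unfolding vc_def using v(1)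
        by (intro eq_vecI) (auto dest!: arg_cong[of _ _ "\<lambda>v. v $ i" for i])
      with v(2) show False by simp
    qed
    have "Lc *\<^sub>v vc = map_vec complex_of_real (k \<cdot>\<^sub>v v)"
      unfolding Lc_def vc_def cmat_mult_vec[OF L v(1)] v(3) ..
    also have "\<dots> = complex_of_real k \<cdot>\<^sub>v vc" unfolding vc_def by (rule eq_vecI) auto
    finally have "R vc = k * nrm2 vc" unfolding R_def using hip_smult_right[OF vc vc] by (simp add: hip_self)
    with claim1[OF vc] have "\<mu> * nrm2 vc \<le> k * nrm2 vc" by simp
    then show ?thesis using nrm2_pos[OF vc vc0] by simp
  qed
  show ?thesis using ev minev claim1 unfolding R_def Lc_def by blast
qed

lemma finite_eigs:
  fixes A :: "'a::{field} mat"
  assumes A: "A \<in> carrier_mat n n"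
  shows "finite {k. eigenvalue A k}"
proof -
  have "char_poly A \<noteq> 0" using degree_monic_char_poly[OF A] by auto
  then have "finite {k. poly (char_poly A) k = 0}" by (rule poly_roots_finite)
  then show ?thesis using eigenvalue_root_char_poly[OF A] by simp
qed

lemma complex_eig_exists:
  fixes A :: "complex mat"
  assumes A: "A \<in> carrier_mat n n" and n: "n > 0"
  shows "\<exists>k. eigenvalue A k"
proof -
  have "degree (char_poly A) = n" using degree_monic_char_poly[OF A] by auto
  then have "\<not> constant (poly (char_poly A))" unfolding constant_degree using n by simp
  then obtain z where "poly (char_poly A) z = 0" using fundamental_theorem_of_algebra by blast
  then show ?thesis using eigenvalue_root_char_poly[OF A] by blast
qed

lemma sigma_eig_bound:
  fixes S :: "complex mat"
  assumes S: "S \<in> carrier_mat m p" and G: "G \<ge> 0"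
    and bound: "\<And>u. u \<in> carrier_vec m \<Longrightarrow> nrm2 (conj_transpose S *\<^sub>v u) \<le> G * nrm2 u"
    and k: "eigenvalue (conj_transpose S * S) k"
  shows "k = complex_of_real (Re k) \<and> Re k \<le> G"
proof -
  define H where "H = conj_transpose S * S"
  have SH: "conj_transpose S \<in> carrier_mat p m" using S by simp
  have H: "H \<in> carrier_mat p p" unfolding H_def by (rule mult_carrier_mat[OF SH S])
  obtain v where v: "v \<in> carrier_vec p" "v \<noteq> 0\<^sub>v p" and Hv: "H *\<^sub>v v = k \<cdot>\<^sub>v v"
    using k H unfolding eigenvalue_def eigenvector_def H_def by auto
  define u where "u = S *\<^sub>v v"
  have u: "u \<in> carrier_vec m" unfolding u_def using S v by simp
  have SHu: "conj_transpose S *\<^sub>v u = k \<cdot>\<^sub>v v"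
    unfolding u_def using assoc_mult_mat_vec[OF SH S v(1)] Hv H_def by simp
  have "hip v (H *\<^sub>v v) = hip v (conj_transpose S *\<^sub>v u)"
    unfolding H_def u_def using assoc_mult_mat_vec[OF SH S v(1)] by simp
  also have "\<dots> = hip u u" using hip_adj[OF SH v(1) u] unfolding u_def by simp
  finally have "k * complex_of_real (nrm2 v) = complex_of_real (nrm2 u)"
    unfolding Hv hip_smult_right[OF v(1) v(1)] hip_self .
  then have kk: "k = complex_of_real (nrm2 u / nrm2 v)" using nrm2_pos[OF v] by (simp add: field_simps)
  define r where "r = nrm2 u / nrm2 v"
  have r0: "r \<ge> 0" unfolding r_def using nrm2_nonneg[of u] nrm2_nonneg[of v] by simp
  have "r \<le> G"
  proof (cases "r = 0")
    case True then show ?thesis using G by simp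
  next
    case False
    then have rp: "r > 0" using r0 by simp
    have "nrm2 (conj_transpose S *\<^sub>v u) = r^2 * nrm2 v" unfolding SHu nrm2_smult kk r_def[symmetric]
      using r0 by simp
    also have "nrm2 u = r * nrm2 v" unfolding r_def using nrm2_pos[OF v] by simp
    ultimately have "r^2 * nrm2 v \<le> G * (r * nrm2 v)" using bound[OF u] by simp
    then have "r * (r * nrm2 v) \<le> r * (G * nrm2 v)" by (simp add: power2_eq_square mult_ac)
    then have "r * nrm2 v \<le> G * nrm2 v" using rp by simp
    then show ?thesis using nrm2_pos[OF v] by simp
  qed
  then show ?thesis using kk r_def by simp
qed

lemma sigma_le:
  fixes S :: "complex mat"
  assumes S: "S \<in> carrier_mat m p" and p: "p > 0" and G: "G \<ge> 0"
    and bound: "\<And>u. u \<in> carrier_vec m \<Longrightarrow> nrm2 (conj_transpose S *\<^sub>v u) \<le> G * nrm2 u"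
  shows "sigma_max S \<le> sqrt G"
proof -
  define H where "H = conj_transpose S * S"
  have H: "H \<in> carrier_mat p p" unfolding H_def by (rule mult_carrier_mat[OF conj_transpose_carrier[OF S] S])
  have fin: "finite (Re ` {k. eigenvalue H k})" using finite_eigs[OF H] by simp
  have ne: "Re ` {k. eigenvalue H k} \<noteq> {}" using complex_eig_exists[OF H p] by auto
  have "Max (Re ` {k. eigenvalue H k}) \<le> G"
    by (rule Max.boundedI[OF fin ne]) (use sigma_eig_bound[OF S G bound] H_def in auto)
  then show ?thesis unfolding sigma_max_def H_def[symmetric] by simp
qed

lemma sigma_eq:
  fixes S :: "complex mat"
  assumes S: "S \<in> carrier_mat m p" and p: "p > 0" and G: "G \<ge> 0"
    and bound: "\<And>u. u \<in> carrier_vec m \<Longrightarrow> nrm2 (conj_transpose S *\<^sub>v u) \<le> G * nrm2 u"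
    and x: "x \<in> carrier_vec m" "x \<noteq> 0\<^sub>v m"
    and Sx: "S *\<^sub>v (conj_transpose S *\<^sub>v x) = complex_of_real G \<cdot>\<^sub>v x"
  shows "sigma_max S = sqrt G"
proof -
  define H where "H = conj_transpose S * S"
  have SH: "conj_transpose S \<in> carrier_mat p m" using S by simp
  have H: "H \<in> carrier_mat p p" unfolding H_def by (rule mult_carrier_mat[OF SH S])
  have fin: "finite (Re ` {k. eigenvalue H k})" using finite_eigs[OF H] by simp
  have evG: "eigenvalue H (complex_of_real G)"
  proof (cases "conj_transpose S *\<^sub>v x = 0\<^sub>v p")
    case False
    define v where "v = conj_transpose S *\<^sub>v x"
    have v: "v \<in> carrier_vec p" unfolding v_def using SH x by simp
    have "H *\<^sub>v v = conj_transpose S *\<^sub>v (complex_of_real G \<cdot>\<^sub>v x)"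
      unfolding H_def v_def using assoc_mult_mat_vec[OF SH S, of "conj_transpose S *\<^sub>v x"] SH x Sx by simp
    also have "\<dots> = complex_of_real G \<cdot>\<^sub>v v" unfolding v_def using mult_mat_vec[OF SH x(1)] .
    finally show ?thesis unfolding eigenvalue_def eigenvector_def using v False H v_def by auto
  next
    case True
    have S0: "S *\<^sub>v 0\<^sub>v p = 0\<^sub>v m" by (rule eq_vecI) (use S in \<open>auto simp: scalar_prod_def\<close>)
    then have "complex_of_real G \<cdot>\<^sub>v x = 0\<^sub>v m" using Sx True by simp
    note h = this
    have "G = 0"
    proof -
      have "nrm2 (complex_of_real G \<cdot>\<^sub>v x) = 0" unfolding h by (simp add: nrm2_def)
      then have "G^2 * nrm2 x = 0" unfolding nrm2_smult by simp
      then show "G = 0" using nrm2_pos[OF x] by simp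
    qed
    then have z: "conj_transpose S *\<^sub>v u = 0\<^sub>v p" if u: "u \<in> carrier_vec m" for u
      using bound[OF u] nrm2_nonneg[of "conj_transpose S *\<^sub>v u"] nrm2_zero_iff[of "conj_transpose S *\<^sub>v u" p] SH u
      by simp
    define v :: "complex vec" where "v = unit_vec p 0"
    have v: "v \<in> carrier_vec p" "v \<noteq> 0\<^sub>v p" unfolding v_def using p
      by (auto simp: unit_vec_def dest!: arg_cong[of _ _ "\<lambda>v. v $ 0"])
    have "H *\<^sub>v v = 0\<^sub>v p" unfolding H_def using assoc_mult_mat_vec[OF SH S v(1)] z[of "S *\<^sub>v v"] S v by simp
    moreover have "0\<^sub>v p = (0::complex) \<cdot>\<^sub>v v" using v by (intro eq_vecI) auto
    ultimately have "H *\<^sub>v v = complex_of_real G \<cdot>\<^sub>v v" using \<open>G = 0\<close> by simp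
    then show ?thesis unfolding eigenvalue_def eigenvector_def using v H by auto
  qed
  have "Max (Re ` {k. eigenvalue H k}) = G"
  proof (rule Max_eqI[OF fin])
    show "y \<le> G" if "y \<in> Re ` {k. eigenvalue H k}" for y
      using that sigma_eig_bound[OF S G bound] H_def by auto
    show "G \<in> Re ` {k. eigenvalue H k}" using evG by force
  qed
  then show ?thesis unfolding sigma_max_def H_def[symmetric] by simp
qed

lemma incidence_carrier[simp]: "incidence n es \<in> carrier_mat n (length es)"
  unfolding incidence_def by simp

lemma incidence_dims[simp]: "dim_row (incidence n es) = n" "dim_col (incidence n es) = length es"
  unfolding incidence_def by simp_all

lemma incidence_index: "k < n \<Longrightarrow> l < length es \<Longrightarrow> incidence n es $$ (k,l) =
   (if k = fst (es ! l) then 1 else if k = snd (es ! l) then -1 else 0)"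
  unfolding incidence_def by simp

lemma ug_adj_mem: "e \<in> set xs \<Longrightarrow> e = (u,v) \<Longrightarrow> (u,v) \<in> ug_adj xs \<and> (v,u) \<in> ug_adj xs"
  unfolding ug_adj_def in_set_conv_nth by auto

lemma nth_in_removed:
  assumes "l < length es" "l \<noteq> l0" "l0 < length es"
  shows "es ! l \<in> set (take l0 es @ drop (Suc l0) es)"
proof (cases "l < l0")
  case True
  then have "take l0 es ! l = es ! l" by simp
  moreover have "l < length (take l0 es)" using True assms by simp
  ultimately show ?thesis by (metis Un_iff nth_mem set_append)
next
  case False
  then have ll: "l > l0" using assms by simp
  have "drop (Suc l0) es ! (l - Suc l0) = es ! l" using ll assms by simp
  moreover have "l - Suc l0 < length (drop (Suc l0) es)" using ll assms by simp
  ultimately show ?thesis by (metis Un_iff nth_mem set_append)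
qed

lemma tree_cut_set:
  assumes tree: "is_tree n es" and l0: "l0 < length es"
  shows "\<exists>S. S \<subseteq> {..<n} \<and> (\<forall>l<length es. (\<Sum>k\<in>S. incidence n es $$ (k,l)) = (if l = l0 then 1 else 0))"
proof -
  define es' where "es' = take l0 es @ drop (Suc l0) es"
  define a where "a = fst (es ! l0)"
  define b where "b = snd (es ! l0)"
  define S where "S = {k. k < n \<and> (a,k) \<in> (ug_adj es')\<^sup>*}"
  have bnd: "\<And>l. l < length es \<Longrightarrow> fst (es ! l) < n \<and> snd (es ! l) < n \<and> fst (es ! l) \<noteq> snd (es ! l)"
    using tree unfolding is_tree_def by blast
  have bridge: "(a, b) \<notin> (ug_adj es')\<^sup>*" using tree l0 unfolding is_tree_def a_def b_def es'_def by blast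
  have colsum: "(\<Sum>k\<in>S. incidence n es $$ (k,l)) = (if fst (es!l) \<in> S then 1 else 0) - (if snd (es!l) \<in> S then 1 else 0)"
    if l: "l < length es" for l
  proof -
    define c where "c = fst (es ! l)"
    define d where "d = snd (es ! l)"
    have cd: "c \<noteq> d" using bnd[OF l] unfolding c_def d_def by simp
    have fin: "finite S" unfolding S_def by simp
    have "(\<Sum>k\<in>S. incidence n es $$ (k,l)) = (\<Sum>k\<in>S. (if k = c then 1 else 0) - (if k = d then 1 else 0))"
      by (rule sum.cong) (use l cd in \<open>auto simp: incidence_index S_def c_def d_def\<close>)
    also have "\<dots> = (if c \<in> S then 1 else 0) - (if d \<in> S then 1 else 0)"
      by (simp add: sum_subtractf fin)
    finally show ?thesis unfolding c_def d_def .
  qed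
  show ?thesis
  proof (intro exI conjI allI impI)
    show "S \<subseteq> {..<n}" unfolding S_def by auto
    fix l assume l: "l < length es"
    show "(\<Sum>k\<in>S. incidence n es $$ (k,l)) = (if l = l0 then 1 else 0)"
    proof (cases "l = l0")
      case True
      have "a \<in> S" unfolding S_def using bnd[OF l0] a_def by auto
      moreover have "b \<notin> S" unfolding S_def using bridge by auto
      ultimately show ?thesis using colsum[OF l] True a_def b_def by simp
    next
      case False
      define c where "c = fst (es ! l)"
      define d where "d = snd (es ! l)"
      have mem: "es ! l \<in> set es'" unfolding es'_def by (rule nth_in_removed[OF l False l0])
      have adj: "(c,d) \<in> ug_adj es'" "(d,c) \<in> ug_adj es'"
        using ug_adj_mem[OF mem, of c d] unfolding c_def d_def by auto
      have cn: "c < n" "d < n" using bnd[OF l] c_def d_def by auto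
      have "c \<in> S \<longleftrightarrow> d \<in> S" unfolding S_def using adj cn
        by (auto intro: rtrancl_into_rtrancl)
      then show ?thesis using colsum[OF l] False unfolding c_def[symmetric] d_def[symmetric] by simp
    qed
  qed
qed

lemma tree_inj:
  assumes tree: "is_tree n es" and y: "y \<in> carrier_vec (length es)"
    and Dy: "cmat (incidence n es) *\<^sub>v y = 0\<^sub>v n"
  shows "y = 0\<^sub>v (length es)"
proof (rule eq_vecI)
  fix l0 assume "l0 < dim_vec (0\<^sub>v (length es) :: complex vec)"
  then have l0: "l0 < length es" by simp
  obtain S where S: "S \<subseteq> {..<n}" and col: "\<And>l. l < length es \<Longrightarrow> (\<Sum>k\<in>S. incidence n es $$ (k,l)) = (if l = l0 then 1 else 0)"
    using tree_cut_set[OF tree l0] by blast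
  have fin: "finite S" using S finite_subset by blast
  have comp: "(\<Sum>l<length es. complex_of_real (incidence n es $$ (k,l)) * y $ l) = 0" if k: "k \<in> S" for k
  proof -
    have kn: "k < n" using k S by auto
    have "(cmat (incidence n es) *\<^sub>v y) $ k = 0" using Dy kn by simp
    moreover have "(\<Sum>j<length es. cmat (incidence n es) $$ (k, j) * y $ j) = (\<Sum>l<length es. complex_of_real (incidence n es $$ (k,l)) * y $ l)"
      by (rule sum.cong) (use kn in auto)
    ultimately show ?thesis using mult_mat_vec_index[OF cmat_carrier[OF incidence_carrier] y kn] by simp
  qed
  have "0 = (\<Sum>k\<in>S. \<Sum>l<length es. complex_of_real (incidence n es $$ (k,l)) * y $ l)"
    using comp by simp
  also have "\<dots> = (\<Sum>l<length es. complex_of_real (\<Sum>k\<in>S. incidence n es $$ (k,l)) * y $ l)"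
    by (subst sum.swap) (simp add: of_real_sum sum_distrib_right)
  also have "\<dots> = (\<Sum>l<length es. (if l = l0 then y $ l else 0))"
    by (rule sum.cong) (auto simp: col)
  also have "\<dots> = y $ l0" using l0 by simp
  finally show "y $ l0 = 0\<^sub>v (length es) $ l0" using l0 by simp
qed (use y in simp)

lemma diag_of_carrier[simp]: "diag_of n d \<in> carrier_mat n n"
  unfolding diag_of_def by simp

lemma diag_of_dims[simp]: "dim_row (diag_of n d) = n" "dim_col (diag_of n d) = n"
  unfolding diag_of_def by simp_all

lemma diag_of_index: "i < n \<Longrightarrow> j < n \<Longrightarrow> diag_of n d $$ (i,j) = (if i = j then d i else 0)"
  unfolding diag_of_def by simp

lemma mult_diag_index:
  assumes A: "A \<in> carrier_mat r k" and i: "i < r" and j: "j < k"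
  shows "(A * diag_of k d) $$ (i,j) = A $$ (i,j) * d j"
proof -
  have "(A * diag_of k d) $$ (i,j) = (\<Sum>l<k. A $$ (i,l) * diag_of k d $$ (l,j))"
    using A i j by (simp add: scalar_prod_def lessThan_atLeast0)
  also have "\<dots> = (\<Sum>l<k. if l = j then A $$ (i,j) * d j else 0)"
    by (rule sum.cong) (use j in \<open>auto simp: diag_of_index\<close>)
  finally show ?thesis using j by simp
qed

lemma diag_mult_vec:
  assumes z: "z \<in> carrier_vec n" and k: "k < n"
  shows "(cmat (diag_of n d) *\<^sub>v z) $ k = complex_of_real (d k) * z $ k"
proof -
  have "(cmat (diag_of n d) *\<^sub>v z) $ k = (\<Sum>l<n. cmat (diag_of n d) $$ (k,l) * z $ l)"
    by (rule mult_mat_vec_index[OF _ z k]) simp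
  also have "\<dots> = (\<Sum>l<n. if l = k then complex_of_real (d k) * z $ k else 0)"
    by (rule sum.cong) (use k in \<open>auto simp: diag_of_index\<close>)
  finally show ?thesis using k by simp
qed

lemma diag_of_inverse:
  assumes "\<And>i. i < n \<Longrightarrow> a i * b i = 1"
  shows "diag_of n a * diag_of n b = 1\<^sub>m n"
proof (rule eq_matI)
  fix i j assume ij: "i < dim_row (1\<^sub>m n)" "j < dim_col (1\<^sub>m n)"
  then have ij: "i < n" "j < n" by auto
  have "(diag_of n a * diag_of n b) $$ (i,j) = diag_of n a $$ (i,j) * b j"
    by (rule mult_diag_index) (use ij in auto)
  then show "(diag_of n a * diag_of n b) $$ (i, j) = 1\<^sub>m n $$ (i, j)"
    using assms ij by (auto simp: diag_of_index)
qed auto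

lemma diag_pow_diag_of: "diag_pow (diag_of n d) p = diag_of n (\<lambda>i. d i powr p)"
  unfolding diag_pow_def diag_of_def by (rule eq_matI) auto

lemma diag_of_const: "diag_of n (\<lambda>_. c) = c \<cdot>\<^sub>m 1\<^sub>m n"
  unfolding diag_of_def by (rule eq_matI) auto

lemma smult_one_is_diag: "c \<cdot>\<^sub>m 1\<^sub>m n = diag_of n (\<lambda>_. c)"
  by (simp add: diag_of_const)

lemma smult_mat_mult_vec_gen:
  fixes A :: "'a::comm_ring_1 mat"
  assumes A: "A \<in> carrier_mat n m" and v: "v \<in> carrier_vec m"
  shows "(c \<cdot>\<^sub>m A) *\<^sub>v v = c \<cdot>\<^sub>v (A *\<^sub>v v)"
  by (rule eq_vecI) (use A v in \<open>auto simp: scalar_prod_smult_left\<close>)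

lemma sum_lessThan_add_split:
  fixes a b :: nat shows "(\<Sum>k<a + b. f k) = (\<Sum>k<a. f k) + (\<Sum>l<b. f (a + l))"
  by (induct b) (auto simp: add.assoc)

lemma eig_smult_one:
  fixes c :: real
  assumes m: "m > 0"
  shows "{k. eigenvalue (c \<cdot>\<^sub>m 1\<^sub>m m) k} = {c}"
proof -
  have "eigenvalue (c \<cdot>\<^sub>m 1\<^sub>m m) k \<longleftrightarrow> k = c" for k
  proof
    assume "eigenvalue (c \<cdot>\<^sub>m 1\<^sub>m m) k"
    then obtain v where v: "v \<in> carrier_vec m" "v \<noteq> 0\<^sub>v m" "(c \<cdot>\<^sub>m 1\<^sub>m m) *\<^sub>v v = k \<cdot>\<^sub>v v"
      unfolding eigenvalue_def eigenvector_def by auto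
    then have "c \<cdot>\<^sub>v v = k \<cdot>\<^sub>v v" using smult_mat_mult_vec_gen[OF one_carrier_mat v(1)] by simp
    moreover obtain i where i: "i < m" "v $ i \<noteq> 0"
      using v(1,2) by (metis carrier_vecD eq_vecI index_zero_vec(1) index_zero_vec(2))
    ultimately have "c * v $ i = k * v $ i" by (metis index_smult_vec(1) carrier_vecD[OF v(1)])
    then show "k = c" using i by simp
  next
    assume k: "k = c"
    define v :: "real vec" where "v = unit_vec m 0"
    have v: "v \<in> carrier_vec m" "v \<noteq> 0\<^sub>v m" unfolding v_def using m
      by (auto simp: unit_vec_def dest!: arg_cong[of _ _ "\<lambda>v. v $ 0"])
    have "(c \<cdot>\<^sub>m 1\<^sub>m m) *\<^sub>v v = k \<cdot>\<^sub>v v" using smult_mat_mult_vec_gen[OF one_carrier_mat v(1)] v k by simp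
    then show "eigenvalue (c \<cdot>\<^sub>m 1\<^sub>m m) k" unfolding eigenvalue_def eigenvector_def using v by auto
  qed
  then show ?thesis by auto
qed

lemma mat_mult_index_sum:
  assumes A: "A \<in> carrier_mat r k" and B: "B \<in> carrier_mat k c" and i: "i < r" and j: "j < c"
  shows "(A * B) $$ (i,j) = (\<Sum>l<k. A $$ (i,l) * B $$ (l,j))"
  using A B i j by (simp add: scalar_prod_def lessThan_atLeast0)

context
  fixes n :: nat and es :: "(nat \<times> nat) list" and \<epsilon> :: "nat \<Rightarrow> real"
  assumes n2: "n \<ge> 2" and tree: "is_tree n es" and len: "length es = n - 1"
    and eps: "\<forall>i<n. \<epsilon> i > 0"
begin

lemma m_pos: "n - 1 > 0" using n2 by simp

lemma eps': "i < n \<Longrightarrow> \<epsilon> i \<noteq> 0" using eps by (metis less_numeral_extra(3))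

lemma minvE: "minv (diag_of n \<epsilon>) = diag_of n (\<lambda>i. 1 / \<epsilon> i)"
  by (rule minv_unique[OF diag_of_carrier diag_of_carrier]; rule diag_of_inverse; use eps' in simp)

lemma D_carrier: "incidence n es \<in> carrier_mat n (n-1)" using len by (metis incidence_carrier)

abbreviation "Lap \<equiv> transpose_mat (incidence n es) * minv (diag_of n \<epsilon>) * incidence n es"

lemma Le_carrier: "Lap \<in> carrier_mat (n-1) (n-1)"
  unfolding minvE using D_carrier by (intro mult_carrier_mat[OF mult_carrier_mat[OF _ diag_of_carrier] D_carrier]) auto

lemma Le_dims[simp]: "dim_row Lap = n - 1" "dim_col Lap = n - 1"
  using Le_carrier by auto

lemma Le_index: assumes i: "i < n - 1" and j: "j < n - 1"
  shows "Lap $$ (i,j) = (\<Sum>k<n. incidence n es $$ (k,i) * (1 / \<epsilon> k) * incidence n es $$ (k,j))"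
proof -
  have DT: "transpose_mat (incidence n es) \<in> carrier_mat (n-1) n" using D_carrier by simp
  have "Lap $$ (i,j) = (\<Sum>k<n. (transpose_mat (incidence n es) * diag_of n (\<lambda>i. 1 / \<epsilon> i)) $$ (i,k) * incidence n es $$ (k,j))"
    unfolding minvE by (rule mat_mult_index_sum[OF mult_carrier_mat[OF DT diag_of_carrier] D_carrier i]) (use j in simp)
  also have "\<dots> = (\<Sum>k<n. incidence n es $$ (k,i) * (1 / \<epsilon> k) * incidence n es $$ (k,j))"
    by (rule sum.cong) (use i D_carrier in \<open>auto simp: mult_diag_index[OF DT]\<close>)
  finally show ?thesis .
qed

lemma Le_sym: "transpose_mat Lap = Lap"
proof (rule eq_matI)
  fix i j assume "i < dim_row Lap" "j < dim_col Lap"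
  then have ij: "i < n - 1" "j < n - 1" using Le_carrier by auto
  have "transpose_mat Lap $$ (i,j) = Lap $$ (j,i)" using ij len by (subst index_transpose_mat) auto
  then show "transpose_mat Lap $$ (i,j) = Lap $$ (i,j)"
    using ij by (simp add: Le_index mult_ac)
qed (use Le_carrier in auto)

lemma Le_quad: assumes y: "y \<in> carrier_vec (n-1)"
  shows "hip y (cmat Lap *\<^sub>v y) = complex_of_real (\<Sum>k<n. (cmod ((cmat (incidence n es) *\<^sub>v y) $ k))\<^sup>2 / \<epsilon> k)"
proof -
  define D where "D = incidence n es"
  define Ei where "Ei = diag_of n (\<lambda>i. 1 / \<epsilon> i)"
  have D: "D \<in> carrier_mat n (n-1)" unfolding D_def by (rule D_carrier)
  have DT: "transpose_mat D \<in> carrier_mat (n-1) n" using D by simp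
  have Ei: "Ei \<in> carrier_mat n n" unfolding Ei_def by simp
  define z where "z = cmat D *\<^sub>v y"
  have z: "z \<in> carrier_vec n" unfolding z_def using mult_mat_vec_carrier[OF cmat_carrier[OF D] y] .
  define w where "w = cmat Ei *\<^sub>v z"
  have w: "w \<in> carrier_vec n" unfolding w_def using mult_mat_vec_carrier[OF cmat_carrier[OF Ei] z] .
  have "cmat Lap = cmat (transpose_mat D) * cmat Ei * cmat D"
    unfolding minvE D_def[symmetric] Ei_def[symmetric]
    using cmat_mult[OF mult_carrier_mat[OF DT Ei] D] cmat_mult[OF DT Ei] by simp
  then have "cmat Lap *\<^sub>v y = cmat (transpose_mat D) *\<^sub>v w"
    unfolding w_def z_def
    using assoc_mult_mat_vec[OF mult_carrier_mat[OF cmat_carrier[OF DT] cmat_carrier[OF Ei]] cmat_carrier[OF D] y]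
      assoc_mult_mat_vec[OF cmat_carrier[OF DT] cmat_carrier[OF Ei], of "cmat D *\<^sub>v y"] D y
      mult_mat_vec_carrier[OF cmat_carrier[OF D] y] by simp
  then have "hip y (cmat Lap *\<^sub>v y) = hip (conj_transpose (cmat (transpose_mat D)) *\<^sub>v y) w"
    using hip_adj[OF cmat_carrier[OF DT] y w] by simp
  also have "\<dots> = hip z w" unfolding conj_transpose_cmat transpose_transpose z_def ..
  also have "\<dots> = (\<Sum>k<n. cnj (z$k) * (complex_of_real (1 / \<epsilon> k) * z $ k))"
    unfolding hip_def w_def Ei_def using z by (auto intro!: sum.cong simp del: index_mult_mat_vec simp: diag_mult_vec[OF z])
  also have "\<dots> = (\<Sum>k<n. complex_of_real ((cmod (z $ k))\<^sup>2 / \<epsilon> k))"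
  proof (rule sum.cong)
    fix k
    have "cnj (z$k) * z$k = complex_of_real ((cmod (z $ k))\<^sup>2)"
      by (metis complex_norm_square mult.commute)
    then show "cnj (z$k) * (complex_of_real (1 / \<epsilon> k) * z $ k) = complex_of_real ((cmod (z $ k))\<^sup>2 / \<epsilon> k)"
    proof -
      have "cnj (z$k) * (complex_of_real (1 / \<epsilon> k) * z $ k) = complex_of_real (1 / \<epsilon> k) * (cnj (z$k) * z$k)"
        by (simp add: mult_ac)
      also have "\<dots> = complex_of_real (1 / \<epsilon> k) * complex_of_real ((cmod (z $ k))\<^sup>2)" using \<open>cnj (z$k) * z$k = _\<close> by simp
      also have "\<dots> = complex_of_real ((cmod (z $ k))\<^sup>2 / \<epsilon> k)" by (simp flip: of_real_mult)
      finally show ?thesis .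
    qed
  qed simp
  finally show ?thesis unfolding z_def D_def of_real_sum .
qed

lemma Le_pd: assumes y: "y \<in> carrier_vec (n-1)" and y0: "y \<noteq> 0\<^sub>v (n-1)"
  shows "Re (hip y (cmat Lap *\<^sub>v y)) > 0"
proof -
  define z where "z = cmat (incidence n es) *\<^sub>v y"
  have z: "z \<in> carrier_vec n" unfolding z_def using mult_mat_vec_carrier[OF cmat_carrier[OF D_carrier] y] .
  have re: "Re (hip y (cmat Lap *\<^sub>v y)) = (\<Sum>k<n. (cmod (z $ k))\<^sup>2 / \<epsilon> k)"
    unfolding Le_quad[OF y] z_def by simp
  have nn: "\<forall>k\<in>{..<n}. 0 \<le> (cmod (z $ k))\<^sup>2 / \<epsilon> k" using eps by (auto intro!: divide_nonneg_pos)
  have "(\<Sum>k<n. (cmod (z $ k))\<^sup>2 / \<epsilon> k) \<noteq> 0"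
  proof
    assume "(\<Sum>k<n. (cmod (z $ k))\<^sup>2 / \<epsilon> k) = 0"
    then have "\<forall>k\<in>{..<n}. (cmod (z $ k))\<^sup>2 / \<epsilon> k = 0" by (subst (asm) sum_nonneg_eq_0_iff) (use nn in auto)
    then have "\<forall>k<n. z $ k = 0" using eps by fastforce
    then have "z = 0\<^sub>v n" using z by (intro eq_vecI) auto
    then have "y = 0\<^sub>v (length es)" using tree_inj[OF tree] y len unfolding z_def by simp
    then show False using y0 len by simp
  qed
  moreover have "0 \<le> (\<Sum>k<n. (cmod (z $ k))\<^sup>2 / \<epsilon> k)" by (rule sum_nonneg) (use nn in auto)
  ultimately show ?thesis unfolding re by simp
qed

lemma Le_spec: "\<exists>\<mu> x. \<mu> > 0 \<and> lam_min Lap = \<mu> \<and> \<mu> \<le> lam_max Lap \<and> x \<in> carrier_vec (n-1) \<and> x \<noteq> 0\<^sub>v (n-1)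
   \<and> Lap *\<^sub>v x = \<mu> \<cdot>\<^sub>v x \<and> (\<forall>w\<in>carrier_vec (n-1). \<mu> * nrm2 w \<le> Re (hip w (cmat Lap *\<^sub>v w)))"
proof -
  obtain \<mu> where ev: "eigenvalue Lap \<mu>" and mn: "\<forall>k. eigenvalue Lap k \<longrightarrow> \<mu> \<le> k"
    and ray: "\<forall>w\<in>carrier_vec (n-1). \<mu> * nrm2 w \<le> Re (hip w (cmat Lap *\<^sub>v w))"
    using spectral_min[OF Le_carrier m_pos Le_sym] by blast
  obtain x where x: "x \<in> carrier_vec (n-1)" "x \<noteq> 0\<^sub>v (n-1)" "Lap *\<^sub>v x = \<mu> \<cdot>\<^sub>v x"
    using ev Le_carrier unfolding eigenvalue_def eigenvector_def by auto
  define xc where "xc = map_vec complex_of_real x"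
  have xc: "xc \<in> carrier_vec (n-1)" unfolding xc_def using x by simp
  have xc0: "xc \<noteq> 0\<^sub>v (n-1)"
  proof
    assume "xc = 0\<^sub>v (n-1)"
    then have "x = 0\<^sub>v (n-1)" unfolding xc_def using x(1)
      by (intro eq_vecI) (auto dest!: arg_cong[of _ _ "\<lambda>v. v $ i" for i])
    with x(2) show False by simp
  qed
  have "cmat Lap *\<^sub>v xc = map_vec complex_of_real (\<mu> \<cdot>\<^sub>v x)"
    unfolding xc_def cmat_mult_vec[OF Le_carrier x(1)] x(3) ..
  also have "\<dots> = complex_of_real \<mu> \<cdot>\<^sub>v xc" unfolding xc_def by (rule eq_vecI) auto
  finally have "Re (hip xc (cmat Lap *\<^sub>v xc)) = \<mu> * nrm2 xc"
    using hip_smult_right[OF xc xc] by (simp add: hip_self)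
  with Le_pd[OF xc xc0] nrm2_pos[OF xc xc0] have mu: "\<mu> > 0"
    by (simp add: zero_less_mult_iff)
  have fin: "finite {k. eigenvalue Lap k}" by (rule finite_eigs[OF Le_carrier])
  have lmin: "lam_min Lap = \<mu>" unfolding lam_min_def
    by (rule Min_eqI[OF fin]) (use mn ev in auto)
  have lmax: "\<mu> \<le> lam_max Lap" unfolding lam_max_def
    by (rule Max_ge[OF fin]) (use ev in auto)
  show ?thesis using mu lmin lmax x ray by blast
qed

end

lemma hcat_index: "i < dim_row A \<Longrightarrow> j < dim_col A + dim_col B \<Longrightarrow>
  hcat A B $$ (i,j) = (if j < dim_col A then A $$ (i,j) else B $$ (i, j - dim_col A))"
  unfolding hcat_def by simp

lemma hcat_dims[simp]: "dim_row (hcat A B) = dim_row A" "dim_col (hcat A B) = dim_col A + dim_col B"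
  unfolding hcat_def by simp_all

context
  fixes n :: nat and es :: "(nat \<times> nat) list" and \<epsilon> :: "nat \<Rightarrow> real" and \<rho> \<sigma>w \<sigma>v :: real
  assumes n2: "n \<ge> 2" and tree: "is_tree n es" and len: "length es = n - 1"
    and eps: "\<forall>i<n. \<epsilon> i > 0" and rho: "\<rho> > 0"
begin

abbreviation "Le \<equiv> Lap n es \<epsilon>"

abbreviation "Bm \<equiv> hcat (\<sigma>w \<cdot>\<^sub>m (transpose_mat (incidence n es) * diag_pow (diag_of n \<epsilon>) (-1/2)))
                        ((- \<sigma>v) \<cdot>\<^sub>m (Le * diag_pow (\<rho> \<cdot>\<^sub>m 1\<^sub>m (n - 1)) (1/2)))"

lemma LeC: "Le \<in> carrier_mat (n-1) (n-1)" by (rule Le_carrier[OF n2 tree len eps])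

lemma Bm_carrier: "Bm \<in> carrier_mat (n-1) (n + (n-1))"
  unfolding diag_pow_diag_of smult_one_is_diag using len LeC by (auto simp: diag_pow_diag_of)

lemma Bm_index: assumes i: "i < n - 1" and k: "k < n + (n - 1)"
  shows "Bm $$ (i,k) = (if k < n then \<sigma>w * incidence n es $$ (k,i) * \<epsilon> k powr (-1/2)
                        else - \<sigma>v * Le $$ (i, k - n) * sqrt \<rho>)"
proof -
  have DT: "transpose_mat (incidence n es) \<in> carrier_mat (n-1) n" using D_carrier[OF n2 tree len eps] by simp
  have W: "diag_pow (\<rho> \<cdot>\<^sub>m 1\<^sub>m (n - 1)) (1/2) = diag_of (n-1) (\<lambda>_. sqrt \<rho>)"
    unfolding smult_one_is_diag diag_pow_diag_of using rho by (simp add: powr_half_sqrt)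
  have E: "diag_pow (diag_of n \<epsilon>) (-1/2) = diag_of n (\<lambda>i. \<epsilon> i powr (-1/2))"
    by (rule diag_pow_diag_of)
  show ?thesis
  proof (cases "k < n")
    case True
    have "Bm $$ (i,k) = \<sigma>w * (transpose_mat (incidence n es) * diag_of n (\<lambda>i. \<epsilon> i powr (-1/2))) $$ (i,k)"
      unfolding E W using i k True len LeC by (subst hcat_index) auto
    also have "\<dots> = \<sigma>w * incidence n es $$ (k,i) * \<epsilon> k powr (-1/2)"
      using mult_diag_index[OF DT i True] i True len by simp
    finally show ?thesis using True by simp
  next
    case False
    have "Bm $$ (i,k) = - \<sigma>v * (Le * diag_of (n-1) (\<lambda>_. sqrt \<rho>)) $$ (i,k-n)"
      unfolding E W using i k False len LeC by (subst hcat_index) auto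
    also have "\<dots> = - \<sigma>v * Le $$ (i, k - n) * sqrt \<rho>"
      using mult_diag_index[OF LeC i, of "k - n"] i k False by simp
    finally show ?thesis using False by simp
  qed
qed

lemma Le_sym': "i < n - 1 \<Longrightarrow> j < n - 1 \<Longrightarrow> Le $$ (j,i) = Le $$ (i,j)"
  using Le_index[OF n2 tree len eps] by (simp add: mult_ac)

lemma BBt: "Bm * transpose_mat Bm = \<sigma>w\<^sup>2 \<cdot>\<^sub>m Le + (\<sigma>v\<^sup>2 * \<rho>) \<cdot>\<^sub>m (Le * Le)"
proof (rule eq_matI)
  fix i j assume "i < dim_row (\<sigma>w\<^sup>2 \<cdot>\<^sub>m Le + (\<sigma>v\<^sup>2 * \<rho>) \<cdot>\<^sub>m (Le * Le))"
    "j < dim_col (\<sigma>w\<^sup>2 \<cdot>\<^sub>m Le + (\<sigma>v\<^sup>2 * \<rho>) \<cdot>\<^sub>m (Le * Le))"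
  then have i: "i < n - 1" and j: "j < n - 1" using LeC by auto
  have BtC: "transpose_mat Bm \<in> carrier_mat (n + (n-1)) (n-1)" using Bm_carrier by simp
  have dB: "dim_row Bm = n - 1" "dim_col Bm = n + (n-1)" using Bm_carrier by (auto simp del: hcat_dims)
  have "(Bm * transpose_mat Bm) $$ (i,j) = (\<Sum>l<n + (n-1). Bm $$ (i,l) * transpose_mat Bm $$ (l,j))"
    by (rule mat_mult_index_sum[OF Bm_carrier BtC i j])
  also have "\<dots> = (\<Sum>l<n + (n-1). Bm $$ (i,l) * Bm $$ (j,l))"
  proof (rule sum.cong[OF refl])
    fix l assume l: "l \<in> {..<n + (n-1)}"
    have "transpose_mat Bm $$ (l,j) = Bm $$ (j,l)"
      by (rule index_transpose_mat(1)) (use l j dB in auto)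
    then show "Bm $$ (i,l) * transpose_mat Bm $$ (l,j) = Bm $$ (i,l) * Bm $$ (j,l)" by simp
  qed
  also have "\<dots> = (\<Sum>l<n. Bm $$ (i,l) * Bm $$ (j,l)) + (\<Sum>l<n-1. Bm $$ (i,n+l) * Bm $$ (j,n+l))"
    by (rule sum_lessThan_add_split)
  also have "(\<Sum>l<n. Bm $$ (i,l) * Bm $$ (j,l)) = \<sigma>w\<^sup>2 * Le $$ (i,j)"
  proof -
    have "(\<Sum>l<n. Bm $$ (i,l) * Bm $$ (j,l)) = (\<Sum>l<n. \<sigma>w\<^sup>2 * (incidence n es $$ (l,i) * (1 / \<epsilon> l) * incidence n es $$ (l,j)))"
    proof (rule sum.cong)
      fix l assume l: "l \<in> {..<n}"
      then have el: "\<epsilon> l > 0" using eps by auto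
      have pw: "\<epsilon> l powr (-1/2) * \<epsilon> l powr (-1/2) = 1 / \<epsilon> l"
        using el by (simp add: powr_add[symmetric] powr_neg_one)
      have ln: "l < n" using l by simp
      have bi: "Bm $$ (i,l) = \<sigma>w * incidence n es $$ (l,i) * \<epsilon> l powr (-1/2)"
        using Bm_index[OF i, of l] ln by simp
      have bj: "Bm $$ (j,l) = \<sigma>w * incidence n es $$ (l,j) * \<epsilon> l powr (-1/2)"
        using Bm_index[OF j, of l] ln by simp
      have "Bm $$ (i,l) * Bm $$ (j,l) = (\<sigma>w * \<sigma>w) * (incidence n es $$ (l,i) * incidence n es $$ (l,j)) * (\<epsilon> l powr (-1/2) * \<epsilon> l powr (-1/2))"
        unfolding bi bj by (simp add: mult_ac)
      then show "Bm $$ (i,l) * Bm $$ (j,l) = \<sigma>w\<^sup>2 * (incidence n es $$ (l,i) * (1 / \<epsilon> l) * incidence n es $$ (l,j))"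
        unfolding pw by (simp add: power2_eq_square mult_ac)
    qed simp
    also have "\<dots> = \<sigma>w\<^sup>2 * Le $$ (i,j)"
      unfolding Le_index[OF n2 tree len eps i j] by (simp add: sum_distrib_left)
    finally show ?thesis .
  qed
  also have "(\<Sum>l<n-1. Bm $$ (i,n+l) * Bm $$ (j,n+l)) = \<sigma>v\<^sup>2 * \<rho> * (Le * Le) $$ (i,j)"
  proof -
    have "(\<Sum>l<n-1. Bm $$ (i,n+l) * Bm $$ (j,n+l)) = (\<Sum>l<n-1. \<sigma>v\<^sup>2 * \<rho> * (Le $$ (i,l) * Le $$ (l,j)))"
    proof (rule sum.cong)
      fix l assume l: "l \<in> {..<n-1}"
      have sr: "sqrt \<rho> * sqrt \<rho> = \<rho>" using rho by simp
      have ln: "l < n - 1" using l by simp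
      have bi: "Bm $$ (i,n+l) = - \<sigma>v * Le $$ (i, l) * sqrt \<rho>"
        using Bm_index[OF i, of "n+l"] ln by simp
      have bj: "Bm $$ (j,n+l) = - \<sigma>v * Le $$ (l, j) * sqrt \<rho>"
        using Bm_index[OF j, of "n+l"] ln Le_sym'[OF ln j] by simp
      have "Bm $$ (i,n+l) * Bm $$ (j,n+l) = (\<sigma>v * \<sigma>v) * (Le $$ (i,l) * Le $$ (l,j)) * (sqrt \<rho> * sqrt \<rho>)"
        unfolding bi bj by (simp add: mult_ac)
      then show "Bm $$ (i,n+l) * Bm $$ (j,n+l) = \<sigma>v\<^sup>2 * \<rho> * (Le $$ (i,l) * Le $$ (l,j))"
        unfolding sr by (simp add: power2_eq_square mult_ac)
    qed simp
    also have "\<dots> = \<sigma>v\<^sup>2 * \<rho> * (Le * Le) $$ (i,j)"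
      unfolding mat_mult_index_sum[OF LeC LeC i j] by (simp add: sum_distrib_left)
    finally show ?thesis .
  qed
  moreover have dL: "dim_row Le = n-1" "dim_col Le = n-1" using LeC by auto
  ultimately show "(Bm * transpose_mat Bm) $$ (i,j) = (\<sigma>w\<^sup>2 \<cdot>\<^sub>m Le + (\<sigma>v\<^sup>2 * \<rho>) \<cdot>\<^sub>m (Le * Le)) $$ (i,j)"
    using i j by simp
qed (use Bm_carrier LeC in auto)

end

lemma scale_conj_transpose: "conj_transpose (complex_of_real c \<cdot>\<^sub>m S) = complex_of_real c \<cdot>\<^sub>m conj_transpose S"
  unfolding conj_transpose_smult by simp

lemma scale_bound:
  assumes S: "S \<in> carrier_mat m p"
    and bound: "\<And>u. u \<in> carrier_vec m \<Longrightarrow> nrm2 (conj_transpose S *\<^sub>v u) \<le> G * nrm2 u"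
    and u: "u \<in> carrier_vec m"
  shows "nrm2 (conj_transpose (complex_of_real c \<cdot>\<^sub>m S) *\<^sub>v u) \<le> (c\<^sup>2 * G) * nrm2 u"
proof -
  have "conj_transpose (complex_of_real c \<cdot>\<^sub>m S) *\<^sub>v u = complex_of_real c \<cdot>\<^sub>v (conj_transpose S *\<^sub>v u)"
    unfolding scale_conj_transpose by (rule smult_mat_mult_vec_gen[OF conj_transpose_carrier[OF S] u])
  then have "nrm2 (conj_transpose (complex_of_real c \<cdot>\<^sub>m S) *\<^sub>v u) = c\<^sup>2 * nrm2 (conj_transpose S *\<^sub>v u)"
    by (simp add: nrm2_smult)
  also have "\<dots> \<le> c\<^sup>2 * (G * nrm2 u)" by (rule mult_left_mono[OF bound[OF u]]) simp
  finally show ?thesis by (simp add: mult_ac)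
qed

lemma scale_attain:
  assumes S: "S \<in> carrier_mat m p" and x: "x \<in> carrier_vec m"
    and Sx: "S *\<^sub>v (conj_transpose S *\<^sub>v x) = complex_of_real G \<cdot>\<^sub>v x"
  shows "(complex_of_real c \<cdot>\<^sub>m S) *\<^sub>v (conj_transpose (complex_of_real c \<cdot>\<^sub>m S) *\<^sub>v x) = complex_of_real (c\<^sup>2 * G) \<cdot>\<^sub>v x"
proof -
  have SH: "conj_transpose S \<in> carrier_mat p m" using S by simp
  have v: "conj_transpose S *\<^sub>v x \<in> carrier_vec p" using SH x by simp
  have "(complex_of_real c \<cdot>\<^sub>m S) *\<^sub>v (conj_transpose (complex_of_real c \<cdot>\<^sub>m S) *\<^sub>v x)
     = complex_of_real c \<cdot>\<^sub>v (S *\<^sub>v (complex_of_real c \<cdot>\<^sub>v (conj_transpose S *\<^sub>v x)))"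
    unfolding scale_conj_transpose smult_mat_mult_vec_gen[OF SH x]
    using smult_mat_mult_vec_gen[OF S, of "complex_of_real c \<cdot>\<^sub>v (conj_transpose S *\<^sub>v x)"] v by simp
  also have "\<dots> = complex_of_real (c\<^sup>2 * G) \<cdot>\<^sub>v x"
    unfolding mult_mat_vec[OF S v] Sx smult_smult_assoc by (simp add: power2_eq_square mult_ac)
  finally show ?thesis .
qed

context
  fixes n :: nat and es :: "(nat \<times> nat) list" and \<epsilon> :: "nat \<Rightarrow> real" and \<rho> \<sigma>w \<sigma>v :: real
  assumes n2: "n \<ge> 2" and tree: "is_tree n es" and len: "length es = n - 1"
    and eps: "\<forall>i<n. \<epsilon> i > 0" and rho: "\<rho> > 0"
begin

abbreviation "Le' \<equiv> Lap n es \<epsilon>"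
abbreviation "Lc \<equiv> cmat Le'"
abbreviation "Bm' \<equiv> Bm n es \<epsilon> \<rho> \<sigma>w \<sigma>v"
abbreviation "Kmat s \<equiv> s \<cdot>\<^sub>m 1\<^sub>m (n - 1) + cmat (Le' * (\<rho> \<cdot>\<^sub>m 1\<^sub>m (n - 1)))"

lemma LeC': "Le' \<in> carrier_mat (n-1) (n-1)" by (rule Le_carrier[OF n2 tree len eps])
lemma LcC: "Lc \<in> carrier_mat (n-1) (n-1)" using LeC' by simp
lemma LcH: "conj_transpose Lc = Lc" unfolding conj_transpose_cmat Le_sym[OF n2 tree len eps] ..
lemma BmC: "Bm' \<in> carrier_mat (n-1) (n + (n-1))" by (rule Bm_carrier[OF n2 tree len eps rho])
lemma cBmC: "cmat Bm' \<in> carrier_mat (n-1) (n + (n-1))" using BmC by simp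
lemma cBmHC: "conj_transpose (cmat Bm') \<in> carrier_mat (n + (n-1)) (n-1)" using BmC by simp

lemma BBt_vec: assumes v: "v \<in> carrier_vec (n-1)"
  shows "cmat Bm' *\<^sub>v (conj_transpose (cmat Bm') *\<^sub>v v)
       = complex_of_real (\<sigma>w\<^sup>2) \<cdot>\<^sub>v (Lc *\<^sub>v v) + complex_of_real (\<sigma>v\<^sup>2 * \<rho>) \<cdot>\<^sub>v (Lc *\<^sub>v (Lc *\<^sub>v v))"
proof -
  have BtC: "transpose_mat Bm' \<in> carrier_mat (n + (n-1)) (n-1)" using BmC by simp
  have "cmat Bm' *\<^sub>v (conj_transpose (cmat Bm') *\<^sub>v v) = cmat (Bm' * transpose_mat Bm') *\<^sub>v v"
    unfolding conj_transpose_cmat cmat_mult[OF BmC BtC]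
    using assoc_mult_mat_vec[OF cmat_carrier[OF BmC] cmat_carrier[OF BtC] v] by simp
  also have "\<dots> = cmat (\<sigma>w\<^sup>2 \<cdot>\<^sub>m Le' + (\<sigma>v\<^sup>2 * \<rho>) \<cdot>\<^sub>m (Le' * Le')) *\<^sub>v v"
    unfolding BBt[OF n2 tree len eps rho] ..
  also have "cmat (\<sigma>w\<^sup>2 \<cdot>\<^sub>m Le' + (\<sigma>v\<^sup>2 * \<rho>) \<cdot>\<^sub>m (Le' * Le'))
     = complex_of_real (\<sigma>w\<^sup>2) \<cdot>\<^sub>m Lc + complex_of_real (\<sigma>v\<^sup>2 * \<rho>) \<cdot>\<^sub>m (Lc * Lc)"
    using LeC' by (simp add: cmat_add[of _ "n-1" "n-1"] cmat_smult cmat_mult[OF LeC' LeC'] mult_carrier_mat[OF LeC' LeC'])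
  also have "(complex_of_real (\<sigma>w\<^sup>2) \<cdot>\<^sub>m Lc + complex_of_real (\<sigma>v\<^sup>2 * \<rho>) \<cdot>\<^sub>m (Lc * Lc)) *\<^sub>v v
     = complex_of_real (\<sigma>w\<^sup>2) \<cdot>\<^sub>v (Lc *\<^sub>v v) + complex_of_real (\<sigma>v\<^sup>2 * \<rho>) \<cdot>\<^sub>v (Lc *\<^sub>v (Lc *\<^sub>v v))"
    using LcC v mult_carrier_mat[OF LcC LcC]
    by (simp add: add_mult_distrib_mat_vec[of _ "n-1" "n-1"] smult_mat_mult_vec_gen[of _ "n-1" "n-1"] assoc_mult_mat_vec[OF LcC LcC v])
  finally show ?thesis .
qed

lemma norm_Bt: assumes y: "y \<in> carrier_vec (n-1)"
  shows "nrm2 (conj_transpose (cmat Bm') *\<^sub>v y) = \<sigma>w\<^sup>2 * Re (hip y (Lc *\<^sub>v y)) + \<sigma>v\<^sup>2 * \<rho> * nrm2 (Lc *\<^sub>v y)"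
proof -
  define z where "z = conj_transpose (cmat Bm') *\<^sub>v y"
  have z: "z \<in> carrier_vec (n + (n-1))" unfolding z_def using cBmHC y by simp
  have Ly: "Lc *\<^sub>v y \<in> carrier_vec (n-1)" using LcC y by simp
  have LLy: "Lc *\<^sub>v (Lc *\<^sub>v y) \<in> carrier_vec (n-1)" using LcC Ly by simp
  have "complex_of_real (nrm2 z) = hip z z" by (simp add: hip_self)
  also have "\<dots> = hip y (cmat Bm' *\<^sub>v z)"
    unfolding z_def using hip_adj[OF cBmC y, of "conj_transpose (cmat Bm') *\<^sub>v y"] cBmHC y by simp
  also have "\<dots> = complex_of_real (\<sigma>w\<^sup>2) * hip y (Lc *\<^sub>v y) + complex_of_real (\<sigma>v\<^sup>2 * \<rho>) * hip y (Lc *\<^sub>v (Lc *\<^sub>v y))"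
    unfolding z_def BBt_vec[OF y]
    using hip_add_right[OF smult_carrier_vec[THEN iffD2, OF Ly] smult_carrier_vec[THEN iffD2, OF LLy] y] hip_smult_right[OF y Ly] hip_smult_right[OF y LLy]
    by simp
  also have "hip y (Lc *\<^sub>v (Lc *\<^sub>v y)) = complex_of_real (nrm2 (Lc *\<^sub>v y))"
    using hip_adj[OF LcC y Ly] LcH by (simp add: hip_self)
  finally have "complex_of_real (nrm2 z) = complex_of_real (\<sigma>w\<^sup>2) * hip y (Lc *\<^sub>v y) + complex_of_real (\<sigma>v\<^sup>2 * \<rho> * nrm2 (Lc *\<^sub>v y))"
    by simp
  then have "nrm2 z = Re (complex_of_real (\<sigma>w\<^sup>2) * hip y (Lc *\<^sub>v y) + complex_of_real (\<sigma>v\<^sup>2 * \<rho> * nrm2 (Lc *\<^sub>v y)))"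
    by (metis Re_complex_of_real)
  then show ?thesis unfolding z_def by simp
qed

lemma KC: "Kmat s \<in> carrier_mat (n-1) (n-1)" using LeC' by (auto intro!: add_carrier_mat mult_carrier_mat)

lemma K_eq: "Kmat s = s \<cdot>\<^sub>m 1\<^sub>m (n-1) + complex_of_real \<rho> \<cdot>\<^sub>m Lc"
  unfolding mult_smult_distrib[OF LeC' one_carrier_mat] right_mult_one_mat[OF LeC'] cmat_smult ..

lemma Kv: assumes y: "y \<in> carrier_vec (n-1)"
  shows "Kmat s *\<^sub>v y = s \<cdot>\<^sub>v y + complex_of_real \<rho> \<cdot>\<^sub>v (Lc *\<^sub>v y)"
  unfolding K_eq using y LcC
  by (simp add: add_mult_distrib_mat_vec[of _ "n-1" "n-1"] smult_mat_mult_vec_gen[of _ "n-1" "n-1"])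

lemma KH: "conj_transpose (Kmat s) = Kmat (cnj s)"
  unfolding K_eq using LcC
  by (simp add: conj_transpose_add[of _ "n-1" "n-1"] conj_transpose_smult conj_transpose_one LcH)

end

context
  fixes n :: nat and es :: "(nat \<times> nat) list" and \<epsilon> :: "nat \<Rightarrow> real" and \<rho> \<sigma>w \<sigma>v :: real
  assumes n2: "n \<ge> 2" and tree: "is_tree n es" and len: "length es = n - 1"
    and eps: "\<forall>i<n. \<epsilon> i > 0" and rho: "\<rho> > 0"
begin

abbreviation "Lc' \<equiv> Lc n es \<epsilon>"
abbreviation "K' s \<equiv> Kmat n es \<epsilon> \<rho> s"
abbreviation "Bm'' \<equiv> Bm n es \<epsilon> \<rho> \<sigma>w \<sigma>v"
abbreviation "Sig' s \<equiv> minv (K' s) * cmat Bm''"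
abbreviation "mu \<equiv> lam_min (Lap n es \<epsilon>)"
abbreviation "GG \<equiv> \<sigma>w\<^sup>2 / (\<rho>\<^sup>2 * mu) + \<sigma>v\<^sup>2 / \<rho>"

lemmas LcC'' = LcC[OF n2 tree len eps rho]
lemmas LcH'' = LcH[OF n2 tree len eps rho]
lemmas KC'' = KC[OF n2 tree len eps rho]
lemmas Kv'' = Kv[OF n2 tree len eps rho]
lemmas KH'' = KH[OF n2 tree len eps rho]
lemmas cBmC'' = cBmC[OF n2 tree len eps rho]
lemmas cBmHC'' = cBmHC[OF n2 tree len eps rho]

lemma mu_facts: "mu > 0" "mu \<le> lam_max (Lap n es \<epsilon>)"
  "\<And>w. w \<in> carrier_vec (n-1) \<Longrightarrow> mu * nrm2 w \<le> Re (hip w (Lc' *\<^sub>v w))"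
  "\<exists>x. x \<in> carrier_vec (n-1) \<and> x \<noteq> 0\<^sub>v (n-1) \<and> Lap n es \<epsilon> *\<^sub>v x = mu \<cdot>\<^sub>v x"
  using Le_spec[OF n2 tree len eps] by metis+

lemma G_nonneg: "GG \<ge> 0" using mu_facts(1) rho by (simp add: divide_nonneg_pos)

lemma K_inv: assumes s: "Re s = 0"
  shows "minv (K' s) \<in> carrier_mat (n-1) (n-1) \<and> K' s * minv (K' s) = 1\<^sub>m (n-1) \<and> minv (K' s) * K' s = 1\<^sub>m (n-1)"
proof -
  have inj: "y = 0\<^sub>v (n-1)" if y: "y \<in> carrier_vec (n-1)" and Ky: "K' s *\<^sub>v y = 0\<^sub>v (n-1)" for y
  proof (rule ccontr)
    assume y0: "y \<noteq> 0\<^sub>v (n-1)"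
    have Ly: "Lc' *\<^sub>v y \<in> carrier_vec (n-1)" using LcC'' y by simp
    have "hip y (K' s *\<^sub>v y) = s * hip y y + complex_of_real \<rho> * hip y (Lc' *\<^sub>v y)"
      unfolding Kv''[OF y]
      using hip_add_right[OF smult_carrier_vec[THEN iffD2, OF y] smult_carrier_vec[THEN iffD2, OF Ly] y]
        hip_smult_right[OF y y] hip_smult_right[OF y Ly] by simp
    moreover have "hip y (K' s *\<^sub>v y) = 0" unfolding Ky using y by (simp add: hip_def)
    ultimately have "s * hip y y + complex_of_real \<rho> * hip y (Lc' *\<^sub>v y) = 0" by simp
    then have "Re (s * hip y y + complex_of_real \<rho> * hip y (Lc' *\<^sub>v y)) = 0" by simp
    then have "0 = Re (s * hip y y) + \<rho> * Re (hip y (Lc' *\<^sub>v y))" by simp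
    also have "Re (s * hip y y) = 0" unfolding hip_self using s by simp
    finally have "\<rho> * Re (hip y (Lc' *\<^sub>v y)) = 0" by simp
    moreover have "Re (hip y (Lc' *\<^sub>v y)) > 0" by (rule Le_pd[OF n2 tree len eps y y0])
    ultimately show False using rho by simp
  qed
  obtain R where R: "R \<in> carrier_mat (n-1) (n-1)" "K' s * R = 1\<^sub>m (n-1)" "R * K' s = 1\<^sub>m (n-1)"
    using inverse_exists[OF KC'' inj] by blast
  have "minv (K' s) = R" by (rule minv_unique[OF KC'' R])
  then show ?thesis using R by simp
qed

lemma SigC: "Re s = 0 \<Longrightarrow> Sig' s \<in> carrier_mat (n-1) (n + (n-1))"
  using K_inv[of s] cBmC'' by (auto intro: mult_carrier_mat)

lemma Sig_H: assumes s: "Re s = 0" and u: "u \<in> carrier_vec (n-1)"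
  shows "conj_transpose (Sig' s) *\<^sub>v u = conj_transpose (cmat Bm'') *\<^sub>v (conj_transpose (minv (K' s)) *\<^sub>v u)"
proof -
  have RC: "minv (K' s) \<in> carrier_mat (n-1) (n-1)" using K_inv[OF s] by simp
  show ?thesis unfolding conj_transpose_mult[OF RC cBmC'']
    by (rule assoc_mult_mat_vec[OF cBmHC'' conj_transpose_carrier[OF RC] u])
qed

lemma RH_inv: assumes s: "Re s = 0" and u: "u \<in> carrier_vec (n-1)"
  shows "K' (cnj s) *\<^sub>v (conj_transpose (minv (K' s)) *\<^sub>v u) = u"
proof -
  have RC: "minv (K' s) \<in> carrier_mat (n-1) (n-1)" using K_inv[OF s] by simp
  have "conj_transpose (K' s) * conj_transpose (minv (K' s)) = conj_transpose (minv (K' s) * K' s)"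
    by (rule conj_transpose_mult[OF RC KC'', symmetric])
  also have "\<dots> = 1\<^sub>m (n-1)" using K_inv[OF s] conj_transpose_one by simp
  finally have "K' (cnj s) * conj_transpose (minv (K' s)) = 1\<^sub>m (n-1)" unfolding KH'' .
  then show ?thesis
    using assoc_mult_mat_vec[OF KC'' conj_transpose_carrier[OF RC] u, of "cnj s"] u by simp
qed

lemma Sig_bound: assumes s: "Re s = 0" and u: "u \<in> carrier_vec (n-1)"
  shows "nrm2 (conj_transpose (Sig' s) *\<^sub>v u) \<le> GG * nrm2 u"
proof -
  have RC: "minv (K' s) \<in> carrier_mat (n-1) (n-1)" using K_inv[OF s] by simp
  define y where "y = conj_transpose (minv (K' s)) *\<^sub>v u"
  have y: "y \<in> carrier_vec (n-1)" unfolding y_def using mult_mat_vec_carrier[OF conj_transpose_carrier[OF RC] u] .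
  have Ly: "Lc' *\<^sub>v y \<in> carrier_vec (n-1)" using LcC'' y by simp
  define q where "q = Re (hip y (Lc' *\<^sub>v y))"
  define N where "N = nrm2 (Lc' *\<^sub>v y)"
  have hq: "hip y (Lc' *\<^sub>v y) = complex_of_real q" unfolding q_def by (rule herm_hip_real[OF LcC'' LcH'' y])
  have lhs: "nrm2 (conj_transpose (Sig' s) *\<^sub>v u) = \<sigma>w\<^sup>2 * q + \<sigma>v\<^sup>2 * \<rho> * N"
    unfolding Sig_H[OF s u] y_def[symmetric] q_def N_def by (rule norm_Bt[OF n2 tree len eps rho y])
  have uy: "u = cnj s \<cdot>\<^sub>v y + complex_of_real \<rho> \<cdot>\<^sub>v (Lc' *\<^sub>v y)"
    using RH_inv[OF s u] Kv''[OF y, of "cnj s"] unfolding y_def by simp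
  have "nrm2 u = nrm2 (cnj s \<cdot>\<^sub>v y) + nrm2 (complex_of_real \<rho> \<cdot>\<^sub>v (Lc' *\<^sub>v y)) + 2 * Re (hip (cnj s \<cdot>\<^sub>v y) (complex_of_real \<rho> \<cdot>\<^sub>v (Lc' *\<^sub>v y)))"
    unfolding uy by (rule nrm2_add[OF smult_carrier_vec[THEN iffD2, OF y] smult_carrier_vec[THEN iffD2, OF Ly]])
  also have "hip (cnj s \<cdot>\<^sub>v y) (complex_of_real \<rho> \<cdot>\<^sub>v (Lc' *\<^sub>v y)) = s * complex_of_real (\<rho> * q)"
    unfolding hip_smult_left hip_smult_right[OF y Ly] hq by simp
  also have "Re (s * complex_of_real (\<rho> * q)) = 0" using s by simp
  finally have nu: "nrm2 u = (cmod s)\<^sup>2 * nrm2 y + \<rho>\<^sup>2 * N" unfolding N_def nrm2_smult by simp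
  have N0: "N \<ge> 0" unfolding N_def by (rule nrm2_nonneg)
  have mu0: "mu > 0" by (rule mu_facts(1))
  have ray: "mu * nrm2 y \<le> q" unfolding q_def by (rule mu_facts(3)[OF y])
  have cs: "q\<^sup>2 \<le> nrm2 y * N"
    using cauchy_schwarz[OF y Ly] unfolding hq N_def by simp
  have muq: "mu * q \<le> N"
  proof (cases "q > 0")
    case False
    then have "mu * q \<le> 0" using mu0 by (intro mult_nonneg_nonpos) auto
    then show ?thesis using N0 by simp
  next
    case True
    have "mu * q\<^sup>2 \<le> mu * (nrm2 y * N)" using cs mu0 by simp
    also have "\<dots> = (mu * nrm2 y) * N" by simp
    also have "\<dots> \<le> q * N" using ray N0 by (rule mult_right_mono)
    finally have "q * (mu * q) \<le> q * N" by (simp add: power2_eq_square mult_ac)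
    then show ?thesis using True by simp
  qed
  have "\<sigma>w\<^sup>2 * q \<le> \<sigma>w\<^sup>2 * (N / mu)"
    using muq mu0 by (intro mult_left_mono) (simp_all add: le_divide_eq mult.commute)
  then have "\<sigma>w\<^sup>2 * q + \<sigma>v\<^sup>2 * \<rho> * N \<le> GG * (\<rho>\<^sup>2 * N)"
    using rho mu0 by (simp add: field_simps power2_eq_square)
  also have "\<dots> \<le> GG * nrm2 u" unfolding nu
    by (rule mult_left_mono[OF _ G_nonneg]) (simp add: nrm2_nonneg)
  finally show ?thesis unfolding lhs .
qed

end

context
  fixes n :: nat and es :: "(nat \<times> nat) list" and \<epsilon> :: "nat \<Rightarrow> real" and \<rho> \<sigma>w \<sigma>v :: real
  assumes n2: "n \<ge> 2" and tree: "is_tree n es" and len: "length es = n - 1"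
    and eps: "\<forall>i<n. \<epsilon> i > 0" and rho: "\<rho> > 0"
begin

lemmas LcC3 = LcC[OF n2 tree len eps rho]
lemmas KC3 = KC[OF n2 tree len eps rho]
lemmas Kv3 = Kv[OF n2 tree len eps rho]
lemmas cBmC3 = cBmC[OF n2 tree len eps rho]
lemmas cBmHC3 = cBmHC[OF n2 tree len eps rho]
lemmas mu3 = mu_facts[OF n2 tree len eps rho]
lemmas K_inv3 = K_inv[OF n2 tree len eps rho]
lemmas LeC3 = Le_carrier[OF n2 tree len eps]

lemma eigvec_c:
  obtains xc where "xc \<in> carrier_vec (n-1)" "xc \<noteq> 0\<^sub>v (n-1)"
    "cmat (Lap n es \<epsilon>) *\<^sub>v xc = complex_of_real (lam_min (Lap n es \<epsilon>)) \<cdot>\<^sub>v xc"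
proof -
  obtain x where x: "x \<in> carrier_vec (n-1)" "x \<noteq> 0\<^sub>v (n-1)" "Lap n es \<epsilon> *\<^sub>v x = lam_min (Lap n es \<epsilon>) \<cdot>\<^sub>v x"
    using mu3(4) by blast
  define xc where "xc = map_vec complex_of_real x"
  have xc: "xc \<in> carrier_vec (n-1)" unfolding xc_def using x by simp
  have xc0: "xc \<noteq> 0\<^sub>v (n-1)"
  proof
    assume "xc = 0\<^sub>v (n-1)"
    then have "x = 0\<^sub>v (n-1)" unfolding xc_def using x(1)
      by (intro eq_vecI) (auto dest!: arg_cong[of _ _ "\<lambda>v. v $ i" for i])
    with x(2) show False by simp
  qed
  have "cmat (Lap n es \<epsilon>) *\<^sub>v xc = map_vec complex_of_real (lam_min (Lap n es \<epsilon>) \<cdot>\<^sub>v x)"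
    unfolding xc_def cmat_mult_vec[OF LeC3 x(1)] x(3) ..
  also have "\<dots> = complex_of_real (lam_min (Lap n es \<epsilon>)) \<cdot>\<^sub>v xc" unfolding xc_def by (rule eq_vecI) auto
  finally show ?thesis using that xc xc0 by blast
qed

lemma Sig_attain: "\<exists>x. x \<in> carrier_vec (n-1) \<and> x \<noteq> 0\<^sub>v (n-1) \<and>
   Sig' n es \<epsilon> \<rho> \<sigma>w \<sigma>v 0 *\<^sub>v (conj_transpose (Sig' n es \<epsilon> \<rho> \<sigma>w \<sigma>v 0) *\<^sub>v x)
     = complex_of_real (GG n es \<epsilon> \<rho> \<sigma>w \<sigma>v) \<cdot>\<^sub>v x"
proof -
  obtain xc where xc: "xc \<in> carrier_vec (n-1)" "xc \<noteq> 0\<^sub>v (n-1)"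
    and Lx: "Lc n es \<epsilon> *\<^sub>v xc = complex_of_real (mu n es \<epsilon>) \<cdot>\<^sub>v xc"
    using eigvec_c by blast
  define K where "K = K' n es \<epsilon> \<rho> 0"
  define R where "R = minv K"
  have KC: "K \<in> carrier_mat (n-1) (n-1)" unfolding K_def by (rule KC3)
  have RC: "R \<in> carrier_mat (n-1) (n-1)" and RK: "R * K = 1\<^sub>m (n-1)"
    using K_inv3[of 0] unfolding R_def K_def by auto
  define c where "c = \<rho> * mu n es \<epsilon>"
  have cp: "c > 0" unfolding c_def using rho mu3(1) by simp
  have Lsm: "Lc n es \<epsilon> *\<^sub>v (a \<cdot>\<^sub>v xc) = complex_of_real (mu n es \<epsilon>) * a \<cdot>\<^sub>v xc" for a
    using mult_mat_vec[OF LcC3 xc(1)] Lx by (simp add: smult_smult_assoc mult.commute)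
  define v where "v = complex_of_real (1 / c) \<cdot>\<^sub>v xc"
  have v: "v \<in> carrier_vec (n-1)" unfolding v_def using xc by simp
  have Kv: "K *\<^sub>v v = xc"
  proof -
    have "K *\<^sub>v v = 0 \<cdot>\<^sub>v v + complex_of_real \<rho> \<cdot>\<^sub>v (Lc n es \<epsilon> *\<^sub>v v)" unfolding K_def by (rule Kv3[OF v])
    also have "\<dots> = xc" unfolding v_def Lsm smult_smult_assoc using cp xc(1)
      by (intro eq_vecI) (auto simp: c_def)
    finally show ?thesis .
  qed
  have Rx: "R *\<^sub>v xc = v"
    unfolding Kv[symmetric] using assoc_mult_mat_vec[OF RC KC v, symmetric] RK v by simp
  have RHx: "conj_transpose R *\<^sub>v xc = v"
  proof -
    have "conj_transpose R * conj_transpose K = conj_transpose (K * R)"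
      by (rule conj_transpose_mult[OF KC RC, symmetric])
    also have "K * R = 1\<^sub>m (n-1)" using K_inv3[of 0] unfolding R_def K_def by auto
    finally have HH: "conj_transpose R * K = 1\<^sub>m (n-1)"
      unfolding conj_transpose_one K_def KH[OF n2 tree len eps rho] by simp
    show ?thesis unfolding Kv[symmetric]
      using assoc_mult_mat_vec[OF conj_transpose_carrier[OF RC] KC v, symmetric] HH v by simp
  qed
  have SH: "conj_transpose (Sig' n es \<epsilon> \<rho> \<sigma>w \<sigma>v 0) *\<^sub>v xc = conj_transpose (cmat (Bm'' n es \<epsilon> \<rho> \<sigma>w \<sigma>v)) *\<^sub>v v"
    using Sig_H[OF n2 tree len eps rho _ xc(1), of 0] RHx unfolding R_def K_def by simp
  have w: "conj_transpose (cmat (Bm'' n es \<epsilon> \<rho> \<sigma>w \<sigma>v)) *\<^sub>v v \<in> carrier_vec (n + (n-1))"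
    by (rule mult_mat_vec_carrier[OF cBmHC3 v])
  have "Sig' n es \<epsilon> \<rho> \<sigma>w \<sigma>v 0 *\<^sub>v (conj_transpose (Sig' n es \<epsilon> \<rho> \<sigma>w \<sigma>v 0) *\<^sub>v xc)
      = R *\<^sub>v (cmat (Bm'' n es \<epsilon> \<rho> \<sigma>w \<sigma>v) *\<^sub>v (conj_transpose (cmat (Bm'' n es \<epsilon> \<rho> \<sigma>w \<sigma>v)) *\<^sub>v v))"
  proof -
    have "Sig' n es \<epsilon> \<rho> \<sigma>w \<sigma>v 0 *\<^sub>v (conj_transpose (Sig' n es \<epsilon> \<rho> \<sigma>w \<sigma>v 0) *\<^sub>v xc)
       = (R * cmat (Bm'' n es \<epsilon> \<rho> \<sigma>w \<sigma>v)) *\<^sub>v (conj_transpose (cmat (Bm'' n es \<epsilon> \<rho> \<sigma>w \<sigma>v)) *\<^sub>v v)"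
      using SH unfolding R_def K_def by simp
    also have "\<dots> = R *\<^sub>v (cmat (Bm'' n es \<epsilon> \<rho> \<sigma>w \<sigma>v) *\<^sub>v (conj_transpose (cmat (Bm'' n es \<epsilon> \<rho> \<sigma>w \<sigma>v)) *\<^sub>v v))"
      by (rule assoc_mult_mat_vec[OF RC cBmC3 w])
    finally show ?thesis .
  qed
  also have "cmat (Bm'' n es \<epsilon> \<rho> \<sigma>w \<sigma>v) *\<^sub>v (conj_transpose (cmat (Bm'' n es \<epsilon> \<rho> \<sigma>w \<sigma>v)) *\<^sub>v v)
      = complex_of_real ((\<sigma>w\<^sup>2 * mu n es \<epsilon> + \<sigma>v\<^sup>2 * \<rho> * (mu n es \<epsilon>)\<^sup>2) / c) \<cdot>\<^sub>v xc"
    unfolding BBt_vec[OF n2 tree len eps rho v] unfolding v_def Lsm smult_smult_assoc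
    using xc(1) by (intro eq_vecI) (auto simp: algebra_simps power2_eq_square add_divide_distrib)
  also have "R *\<^sub>v \<dots> = complex_of_real ((\<sigma>w\<^sup>2 * mu n es \<epsilon> + \<sigma>v\<^sup>2 * \<rho> * (mu n es \<epsilon>)\<^sup>2) / c) \<cdot>\<^sub>v v"
    unfolding mult_mat_vec[OF RC xc(1)] Rx ..
  also have "\<dots> = complex_of_real (((\<sigma>w\<^sup>2 * mu n es \<epsilon> + \<sigma>v\<^sup>2 * \<rho> * (mu n es \<epsilon>)\<^sup>2) / c) * (1 / c)) \<cdot>\<^sub>v xc"
    unfolding v_def smult_smult_assoc of_real_mult ..
  also have "((\<sigma>w\<^sup>2 * mu n es \<epsilon> + \<sigma>v\<^sup>2 * \<rho> * (mu n es \<epsilon>)\<^sup>2) / c) * (1 / c) = GG n es \<epsilon> \<rho> \<sigma>w \<sigma>v"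
    using mu3(1) rho by (simp add: c_def field_simps power2_eq_square)
  finally show ?thesis using xc by blast
qed

end

context
  fixes n :: nat and es :: "(nat \<times> nat) list" and \<epsilon> :: "nat \<Rightarrow> real" and \<rho> :: real
  assumes n2: "n \<ge> 2" and tree: "is_tree n es" and len: "length es = n - 1"
    and eps: "\<forall>i<n. \<epsilon> i > 0" and rho: "\<rho> > 0"
begin

lemma minvLe_sigma: "sigma_max (cmat (minv (Lap n es \<epsilon>))) = 1 / lam_min (Lap n es \<epsilon>)"
proof -
  define L where "L = Lap n es \<epsilon>"
  define mu where "mu = lam_min L"
  have LC: "L \<in> carrier_mat (n-1) (n-1)" unfolding L_def by (rule Le_carrier[OF n2 tree len eps])
  have mu0: "mu > 0" unfolding mu_def L_def using mu_facts[OF n2 tree len eps rho] by blast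
  have ray: "\<And>w. w \<in> carrier_vec (n-1) \<Longrightarrow> mu * nrm2 w \<le> Re (hip w (cmat L *\<^sub>v w))"
    unfolding mu_def L_def using mu_facts[OF n2 tree len eps rho] by blast
  have inj: "x = 0\<^sub>v (n-1)" if x: "x \<in> carrier_vec (n-1)" and Lx: "L *\<^sub>v x = 0\<^sub>v (n-1)" for x
  proof (rule ccontr)
    assume x0: "x \<noteq> 0\<^sub>v (n-1)"
    define xc where "xc = map_vec complex_of_real x"
    have xc: "xc \<in> carrier_vec (n-1)" unfolding xc_def using x by simp
    have xc0: "xc \<noteq> 0\<^sub>v (n-1)"
    proof
      assume "xc = 0\<^sub>v (n-1)"
      then have "x = 0\<^sub>v (n-1)" unfolding xc_def using x
        by (intro eq_vecI) (auto dest!: arg_cong[of _ _ "\<lambda>v. v $ i" for i])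
      with x0 show False by simp
    qed
    have "cmat L *\<^sub>v xc = 0\<^sub>v (n-1)" unfolding xc_def cmat_mult_vec[OF LC x] Lx by (rule eq_vecI) auto
    then have "hip xc (cmat L *\<^sub>v xc) = 0" using xc by (simp add: hip_def)
    with Le_pd[OF n2 tree len eps xc xc0] show False unfolding L_def by simp
  qed
  obtain B where BC: "B \<in> carrier_mat (n-1) (n-1)" and LB: "L * B = 1\<^sub>m (n-1)" and BL: "B * L = 1\<^sub>m (n-1)"
    using inverse_exists[OF LC inj] by blast
  have mB: "minv L = B" by (rule minv_unique[OF LC BC LB BL])
  have LT: "transpose_mat L = L" unfolding L_def by (rule Le_sym[OF n2 tree len eps])
  have "transpose_mat B * L = transpose_mat (L * B)"
    using transpose_mult[OF LC BC] LT by simp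
  also have "\<dots> = 1\<^sub>m (n-1)" unfolding LB by simp
  finally have BTL: "transpose_mat B * L = 1\<^sub>m (n-1)" .
  have BTC: "transpose_mat B \<in> carrier_mat (n-1) (n-1)" using BC by simp
  have "transpose_mat B = transpose_mat B * (L * B)" unfolding LB using BTC by simp
  also have "\<dots> = (transpose_mat B * L) * B" using assoc_mult_mat[OF BTC LC BC] by simp
  also have "\<dots> = B" unfolding BTL using BC by simp
  finally have BT: "transpose_mat B = B" .
  define S where "S = cmat B"
  have SC: "S \<in> carrier_mat (n-1) (n-1)" unfolding S_def using BC by simp
  have SH: "conj_transpose S = S" unfolding S_def conj_transpose_cmat BT ..
  have cLB: "cmat L * cmat B = 1\<^sub>m (n-1)" by (metis cmat_mult[OF LC BC] LB cmat_one)
  have cBL: "cmat B * cmat L = 1\<^sub>m (n-1)" by (metis cmat_mult[OF BC LC] BL cmat_one)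
  have LS: "cmat L *\<^sub>v (S *\<^sub>v u) = u" if u: "u \<in> carrier_vec (n-1)" for u
    unfolding S_def using assoc_mult_mat_vec[OF cmat_carrier[OF LC] cmat_carrier[OF BC] u, symmetric]
      cLB u by simp
  have SL: "S *\<^sub>v (cmat L *\<^sub>v u) = u" if u: "u \<in> carrier_vec (n-1)" for u
    unfolding S_def using assoc_mult_mat_vec[OF cmat_carrier[OF BC] cmat_carrier[OF LC] u, symmetric]
      cBL u by simp
  have bound: "nrm2 (conj_transpose S *\<^sub>v u) \<le> (1/mu)\<^sup>2 * nrm2 u" if u: "u \<in> carrier_vec (n-1)" for u
  proof -
    define z where "z = S *\<^sub>v u"
    have z: "z \<in> carrier_vec (n-1)" unfolding z_def using SC u by simp
    have "mu * nrm2 z \<le> Re (hip z u)" using ray[OF z] LS[OF u] unfolding z_def by simp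
    also have "\<dots> \<le> cmod (hip z u)" by (rule Re_le_cmod')
    finally have a: "mu * nrm2 z \<le> cmod (hip z u)" .
    have a0: "0 \<le> mu * nrm2 z" using mu0 nrm2_nonneg[of z] by simp
    have "(mu * nrm2 z)\<^sup>2 \<le> (cmod (hip z u))\<^sup>2" using a a0 by (rule power_mono)
    also have "\<dots> \<le> nrm2 z * nrm2 u" by (rule cauchy_schwarz[OF z u])
    finally have b: "mu\<^sup>2 * nrm2 z * nrm2 z \<le> nrm2 z * nrm2 u" by (simp add: power2_eq_square mult_ac)
    have "mu\<^sup>2 * nrm2 z \<le> nrm2 u"
    proof (cases "nrm2 z = 0")
      case True then show ?thesis by (simp add: nrm2_nonneg)
    next
      case False
      then have "nrm2 z > 0" using nrm2_nonneg[of z] by simp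
      then show ?thesis using b by (simp add: mult.commute)
    qed
    then show ?thesis unfolding SH z_def[symmetric] using mu0 by (simp add: field_simps power2_eq_square)
  qed
  obtain xc where xc: "xc \<in> carrier_vec (n-1)" "xc \<noteq> 0\<^sub>v (n-1)"
    and Lx: "cmat L *\<^sub>v xc = complex_of_real mu \<cdot>\<^sub>v xc"
    using eigvec_c[OF n2 tree len eps rho] unfolding mu_def L_def by blast
  have Sx: "S *\<^sub>v xc = complex_of_real (1/mu) \<cdot>\<^sub>v xc"
  proof -
    have "xc = S *\<^sub>v (complex_of_real mu \<cdot>\<^sub>v xc)" using SL[OF xc(1)] Lx by simp
    also have "\<dots> = complex_of_real mu \<cdot>\<^sub>v (S *\<^sub>v xc)" by (rule mult_mat_vec[OF SC xc(1)])
    finally have "complex_of_real (1/mu) \<cdot>\<^sub>v xc = complex_of_real (1/mu) \<cdot>\<^sub>v (complex_of_real mu \<cdot>\<^sub>v (S *\<^sub>v xc))"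
      by simp
    also have "\<dots> = S *\<^sub>v xc" unfolding smult_smult_assoc using mu0 by (simp flip: of_real_mult)
    finally show ?thesis ..
  qed
  have att: "S *\<^sub>v (conj_transpose S *\<^sub>v xc) = complex_of_real ((1/mu)\<^sup>2) \<cdot>\<^sub>v xc"
    unfolding SH Sx mult_mat_vec[OF SC xc(1)] smult_smult_assoc by (simp add: power2_eq_square)
  have "sigma_max S = sqrt ((1/mu)\<^sup>2)"
    by (rule sigma_eq[OF SC _ _ bound xc att]) (use n2 in auto)
  then show ?thesis unfolding S_def mB[symmetric] L_def[symmetric] mu_def[symmetric] using mu0 by simp
qed

end

theorem corollary3:
  fixes n :: nat and es :: "(nat \<times> nat) list" and \<rho> \<sigma>w \<sigma>v :: real
    and \<epsilon> :: "nat \<Rightarrow> real"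
    and D E W Le :: "real mat" and Sig Pi :: "complex \<Rightarrow> complex mat"
    and L1 L2 U :: real
  assumes "n \<ge> 2" and "is_tree n es" and "length es = n - 1"
    and "\<rho> > 0" and "\<forall>i<n. \<epsilon> i > 0"
  defines "D \<equiv> incidence n es"
    and "E \<equiv> diag_of n \<epsilon>"
    and "W \<equiv> \<rho> \<cdot>\<^sub>m 1\<^sub>m (n - 1)"
    and "Le \<equiv> transpose_mat D * minv E * D"
    and "Sig \<equiv> (\<lambda>s. minv (s \<cdot>\<^sub>m 1\<^sub>m (n - 1) + cmat (Le * W)) *
                 cmat (hcat (\<sigma>w \<cdot>\<^sub>m (transpose_mat D * diag_pow E (-1/2)))
                            ((- \<sigma>v) \<cdot>\<^sub>m (Le * diag_pow W (1/2)))))"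
    and "Pi \<equiv> (\<lambda>s. cmat (diag_pow W (1/2)) * Sig s)"
    and "L1 \<equiv> (\<sigma>w\<^sup>2 + \<sigma>v\<^sup>2 * lam_min Le * lam_max (diag_pow W (1/2)) ^ 2)
              / (lam_min Le * lam_max (diag_pow W (1/2)) ^ 4)"
    and "L2 \<equiv> (\<sigma>w\<^sup>2 + \<sigma>v\<^sup>2 * lam_max Le * lam_max (diag_pow W (1/2)) * lam_min (diag_pow W (1/2)))
              / (lam_max Le * lam_max (diag_pow W (1/2)) ^ 3 * lam_min (diag_pow W (1/2)))"
    and "U \<equiv> (\<sigma>w\<^sup>2 + \<sigma>v\<^sup>2 * lam_min Le * lam_min (diag_pow W (1/2)) ^ 2)
              / (lam_min Le * lam_min (diag_pow W (1/2)) ^ 4)"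
  shows "(hinf_norm Sig)\<^sup>2 = (1 / \<rho>) * (hinf_norm Pi)\<^sup>2
       \<and> (1 / \<rho>) * (hinf_norm Pi)\<^sup>2
           = (1 / \<rho>\<^sup>2) * \<sigma>w\<^sup>2 * sigma_max (cmat (minv Le)) + (1 / \<rho>) * \<sigma>v\<^sup>2
       \<and> (1 / \<rho>\<^sup>2) * \<sigma>w\<^sup>2 * sigma_max (cmat (minv Le)) + (1 / \<rho>) * \<sigma>v\<^sup>2 = max L1 L2
       \<and> max L1 L2 = U"
proof -
  have m0: "n - 1 > 0" using assms(1) by simp
  have p0: "n + (n - 1) > 0" using assms(1) by simp
  note A = assms(1) assms(2) assms(3) assms(5) assms(4)
  define mu where "mu = lam_min Le"
  define G where "G = \<sigma>w\<^sup>2 / (\<rho>\<^sup>2 * mu) + \<sigma>v\<^sup>2 / \<rho>"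
  have LeE: "Le = Lap n es \<epsilon>" unfolding Le_def D_def E_def ..
  have SigE: "Sig = Sig' n es \<epsilon> \<rho> \<sigma>w \<sigma>v" unfolding Sig_def Le_def D_def E_def W_def ..
  have GE: "G = GG n es \<epsilon> \<rho> \<sigma>w \<sigma>v" unfolding G_def mu_def LeE ..
  have mu0: "mu > 0" and mumax: "mu \<le> lam_max Le" unfolding mu_def LeE using mu_facts[OF A] by blast+
  have G0: "G \<ge> 0" unfolding GE by (rule G_nonneg[OF A])
  have Re0: "Re (\<i> * complex_of_real \<omega>) = 0" for \<omega> by simp
  have sig_le: "sigma_max (Sig (\<i> * complex_of_real \<omega>)) \<le> sqrt G" for \<omega>
    unfolding SigE GE
    by (rule sigma_le[OF SigC[OF A Re0] p0 G_nonneg[OF A] Sig_bound[OF A Re0]])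
  obtain x where x: "x \<in> carrier_vec (n-1)" "x \<noteq> 0\<^sub>v (n-1)"
    and att: "Sig' n es \<epsilon> \<rho> \<sigma>w \<sigma>v 0 *\<^sub>v (conj_transpose (Sig' n es \<epsilon> \<rho> \<sigma>w \<sigma>v 0) *\<^sub>v x)
     = complex_of_real (GG n es \<epsilon> \<rho> \<sigma>w \<sigma>v) \<cdot>\<^sub>v x"
    using Sig_attain[OF A] by blast
  have Re00: "Re (0::complex) = 0" by simp
  have sig_eq0: "sigma_max (Sig 0) = sqrt G"
    unfolding SigE GE
    by (rule sigma_eq[OF SigC[OF A Re00] p0 G_nonneg[OF A] Sig_bound[OF A Re00] x att])
  have hS: "hinf_norm Sig = sqrt G"
    unfolding hinf_norm_def
  proof (rule cSup_eq_maximum)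
    show "sqrt G \<in> range (\<lambda>\<omega>. sigma_max (Sig (\<i> * complex_of_real \<omega>)))"
      using sig_eq0 by (metis (mono_tags, lifting) mult_zero_right of_real_0 rangeI)
    show "y \<le> sqrt G" if "y \<in> range (\<lambda>\<omega>. sigma_max (Sig (\<i> * complex_of_real \<omega>)))" for y
      using that sig_le by auto
  qed
  have Wh: "diag_pow W (1/2) = sqrt \<rho> \<cdot>\<^sub>m 1\<^sub>m (n - 1)"
    unfolding W_def smult_one_is_diag diag_pow_diag_of using assms(4) by (simp add: powr_half_sqrt)
  have PiE: "Pi s = complex_of_real (sqrt \<rho>) \<cdot>\<^sub>m Sig s" if s: "Re s = 0" for s
  proof -
    have SC: "Sig s \<in> carrier_mat (n-1) (n + (n-1))" unfolding SigE by (rule SigC[OF A s])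
    have "Pi s = (complex_of_real (sqrt \<rho>) \<cdot>\<^sub>m 1\<^sub>m (n-1)) * Sig s"
      unfolding Pi_def Wh cmat_smult cmat_one ..
    also have "\<dots> = complex_of_real (sqrt \<rho>) \<cdot>\<^sub>m (1\<^sub>m (n-1) * Sig s)"
      by (rule mult_smult_assoc_mat[OF one_carrier_mat SC])
    also have "\<dots> = complex_of_real (sqrt \<rho>) \<cdot>\<^sub>m Sig s" using SC by simp
    finally show ?thesis .
  qed
  have rr: "(sqrt \<rho>)\<^sup>2 = \<rho>" using assms(4) by simp
  have pi_le: "sigma_max (Pi (\<i> * complex_of_real \<omega>)) \<le> sqrt (\<rho> * G)" for \<omega>
  proof -
    have SC: "Sig (\<i> * complex_of_real \<omega>) \<in> carrier_mat (n-1) (n + (n-1))" unfolding SigE by (rule SigC[OF A Re0])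
    have bd: "\<And>u. u \<in> carrier_vec (n-1) \<Longrightarrow> nrm2 (conj_transpose (Sig (\<i> * complex_of_real \<omega>)) *\<^sub>v u) \<le> G * nrm2 u"
      unfolding SigE GE by (rule Sig_bound[OF A Re0])
    have "sigma_max (complex_of_real (sqrt \<rho>) \<cdot>\<^sub>m Sig (\<i> * complex_of_real \<omega>)) \<le> sqrt ((sqrt \<rho>)\<^sup>2 * G)"
      by (rule sigma_le[OF smult_carrier_mat[OF SC] p0 _ scale_bound[OF SC bd]]) (use G0 in simp)
    then show ?thesis unfolding PiE[OF Re0] rr .
  qed
  have pi_eq0: "sigma_max (Pi 0) = sqrt (\<rho> * G)"
  proof -
    have SC: "Sig 0 \<in> carrier_mat (n-1) (n + (n-1))" unfolding SigE by (rule SigC[OF A Re00])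
    have bd: "\<And>u. u \<in> carrier_vec (n-1) \<Longrightarrow> nrm2 (conj_transpose (Sig 0) *\<^sub>v u) \<le> G * nrm2 u"
      unfolding SigE GE by (rule Sig_bound[OF A Re00])
    have at: "Sig 0 *\<^sub>v (conj_transpose (Sig 0) *\<^sub>v x) = complex_of_real G \<cdot>\<^sub>v x"
      unfolding SigE GE by (rule att)
    show ?thesis unfolding PiE[OF Re00]
      using sigma_eq[OF smult_carrier_mat[OF SC] p0 _ scale_bound[OF SC bd] x scale_attain[OF SC x(1) at]]
        rr G0 assms(4) by simp
  qed
  have hP: "hinf_norm Pi = sqrt (\<rho> * G)"
    unfolding hinf_norm_def
  proof (rule cSup_eq_maximum)
    show "sqrt (\<rho> * G) \<in> range (\<lambda>\<omega>. sigma_max (Pi (\<i> * complex_of_real \<omega>)))"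
      using pi_eq0 by (metis (mono_tags, lifting) mult_zero_right of_real_0 rangeI)
    show "y \<le> sqrt (\<rho> * G)" if "y \<in> range (\<lambda>\<omega>. sigma_max (Pi (\<i> * complex_of_real \<omega>)))" for y
      using that pi_le by auto
  qed
  have sm: "sigma_max (cmat (minv Le)) = 1 / mu"
    unfolding mu_def LeE by (rule minvLe_sigma[OF A])
  have WhR: "diag_pow W (1/2) = sqrt \<rho> \<cdot>\<^sub>m 1\<^sub>m (n - 1)" by (rule Wh)
  have lmW: "lam_max (diag_pow W (1/2)) = sqrt \<rho>" "lam_min (diag_pow W (1/2)) = sqrt \<rho>"
    unfolding lam_max_def lam_min_def WhR eig_smult_one[OF m0] by simp_all
  define lM where "lM = lam_max Le"
  have lM0: "lM > 0" unfolding lM_def using mu0 mumax by simp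
  have r4: "(sqrt \<rho>)^4 = \<rho>\<^sup>2" and r3: "(sqrt \<rho>)^3 * sqrt \<rho> = \<rho>\<^sup>2" and r2: "sqrt \<rho> * sqrt \<rho> = \<rho>"
    using assms(4) by (simp_all add: power_def numeral_eq_Suc power2_eq_square)
  have L1E: "L1 = G" unfolding L1_def G_def lmW mu_def[symmetric] rr r4
    using mu0 assms(4) by (simp add: field_simps power2_eq_square)
  have L2E: "L2 = \<sigma>w\<^sup>2 / (\<rho>\<^sup>2 * lM) + \<sigma>v\<^sup>2 / \<rho>" unfolding L2_def lmW lM_def[symmetric]
    using lM0 assms(4) by (simp add: field_simps power2_eq_square power3_eq_cube)
  have UE: "U = G" unfolding U_def G_def lmW mu_def[symmetric] rr r4
    using mu0 assms(4) by (simp add: field_simps power2_eq_square)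
  have "\<sigma>w\<^sup>2 / (\<rho>\<^sup>2 * lM) \<le> \<sigma>w\<^sup>2 / (\<rho>\<^sup>2 * mu)"
    using mu0 assms(4) mumax unfolding lM_def
    by (intro divide_left_mono mult_left_mono) (auto simp: mult_pos_pos)
  then have L21: "L2 \<le> L1" unfolding L2E L1E G_def by simp
  have mid: "(1 / \<rho>\<^sup>2) * \<sigma>w\<^sup>2 * sigma_max (cmat (minv Le)) + (1 / \<rho>) * \<sigma>v\<^sup>2 = G"
    unfolding sm G_def by (simp add: field_simps)
  have sG: "(sqrt G)\<^sup>2 = G" using G0 by simp
  have sPG: "(1 / \<rho>) * (sqrt (\<rho> * G))\<^sup>2 = G" using G0 assms(4) by simp
  show ?thesis unfolding hS hP sG sPG mid using L21 L1E UE by simp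
qed

end
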